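(* Let $k$ be a positive integer and $G_1,\dots,G_m$ finite subgraphs of $\mathsf{Path}_{\mathbb Z}$ with $G_1\cup\dots\cup G_m=\mathsf{Path}_k$, and let $g:=\mathrm{gap}(G_1,\dots,G_m)$. Then there exists a shift permutation $\sigma$ of $[m]$ such that \[\vec\lambda(G_{\sigma(1)},\dots,G_{\sigma(m)})\ge\frac{g-3\max\{\lambda(G_1),\dots,\lambda(G_m)\}}{4}\] and \[\vec\Delta(G_{\tilde\sigma_j(1)},\dots,G_{\tilde\sigma_j(m)})\ge\frac{k}{4g}\quad\text{for all }j\in[m].\]
   Context: Graphs are finite simple graphs without isolated vertices; $\emptyset$ is the empty graph. $\mathsf{Path}_{\mathbb Z}$ has vertex set $\mathbb Z$ and edges $\{i-1,i\}$; for integers $s<t$, $\mathsf{Path}_{s,t}$ has vertices $s,\dots,t$ and edges $\{i-1,i\}$, $s<i\le t$; $\mathsf{Path}_k=\mathsf{Path}_{0,k}$. $\Delta(G)$ = number of connected components; $\lambda(G)$ = maximum number of edges in a component ($0$ for $\emptyset$); $G\ominus F$ = union of components of $G$ sharing no vertex with $F$. $\vec\Delta(H_1,\dots,H_r)=\sum_l\Delta(H_l\ominus(H_1\cup\dots\cup H_{l-1}))$, $\vec\lambda(H_1,\dots,H_r)=\sum_l\lambda(H_l\ominus(H_1\cup\dots\cup H_{l-1}))$. Shift permutations: permutations $\sigma$ of $[m]$ with $\sigma(j)\ge j-1$ for all $j$. For $I\subseteq[m]$ with $m\in I$, $I=\{i_1<\dots<i_p\}$, $i_0:=0$, let $\sigma_I(j)=i_h$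 if $j=i_{h-1}+1$ for some $h$, and $\sigma_I(j)=j-1$ otherwise; every shift permutation is $\sigma_I$ for exactly one such $I$. For $\sigma=\sigma_I$ and $j\in[m]$, $\tilde\sigma_j:=\sigma_{\tilde I_j}$ with $\tilde I_j=I\cup[i_{h-1}]$ if $j=i_h\in I$ and $\tilde I_j=I\cup[j-1]$ if $j\notin I$. Gap: let $c=\vec\Delta(G_1,\dots,G_m)$ and $0\le s_1<t_1<\dots<s_c<t_c\le k$ the integers with $\bigcup_{j=1}^m\big(G_j\ominus(G_1\cup\dots\cup G_{j-1})\big)=\bigcup_{i=1}^c\mathsf{Path}_{s_i,t_i}$; $\mathrm{gap}(G_1,\dots,G_m):=\max_{y\in[0,k]}\min_{i}\big|\frac{s_i+t_i}{2}-y\big|$. *)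

theory Defs
  imports Complex_Main
begin

text \<open>A finite subgraph of Path_Z without isolated vertices is represented by the
set of its edges, where the edge {i-1,i} is encoded by the integer i.
Thus Path_{s,t} is encoded by {s+1..t} and Path_k by {1..k}.\<close>

type_synonym pgraph = "int set"

definition verts :: "pgraph \<Rightarrow> int set" where
  "verts G = {v. v \<in> G \<or> v + 1 \<in> G}"

definition comp :: "pgraph \<Rightarrow> int \<Rightarrow> pgraph" where
  "comp G i = {j. {min i j..max i j} \<subseteq> G}"

definition components :: "pgraph \<Rightarrow> pgraph set" where
  "components G = comp G ` G"

definition Delta :: "pgraph \<Rightarrow> nat" where
  "Delta G = card (components G)"

definition lam :: "pgraph \<Rightarrow> nat" where
  "lam G = (if G = {} then 0 else Max (card ` components G))"

definition ominus :: "pgraph \<Rightarrow> pgraph \<Rightarrow> pgraph" where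
  "ominus G F = \<Union> {C \<in> components G. verts C \<inter> verts F = {}}"

definition vec_parts :: "pgraph list \<Rightarrow> pgraph list" where
  "vec_parts Hs = map (\<lambda>l. ominus (Hs ! l) (\<Union> (set (take l Hs)))) [0..<length Hs]"

definition vecDelta :: "pgraph list \<Rightarrow> nat" where
  "vecDelta Hs = (\<Sum>H\<leftarrow>vec_parts Hs. Delta H)"

definition vecLambda :: "pgraph list \<Rightarrow> nat" where
  "vecLambda Hs = (\<Sum>H\<leftarrow>vec_parts Hs. lam H)"

text \<open>Midpoint (s+t)/2 of the path component Path_{s,t}, encoded by edges {s+1..t}.\<close>
definition midpoint :: "pgraph \<Rightarrow> real" where
  "midpoint C = (real_of_int (Min C - 1) + real_of_int (Max C)) / 2"

definition gap :: "nat \<Rightarrow> pgraph list \<Rightarrow> real" where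
  "gap k Hs = (let U = \<Union> (set (vec_parts Hs)) in
     (SUP y\<in>{0..real k}. Min ((\<lambda>C. \<bar>midpoint C - y\<bar>) ` components U)))"

text \<open>Shift permutation sigma_I for I = {i_1 < ... < i_p} with i_0 = 0.\<close>
definition idx :: "nat set \<Rightarrow> nat \<Rightarrow> nat" where
  "idx I h = (if h = 0 then 0 else sorted_list_of_set I ! (h - 1))"

definition sigmaI :: "nat set \<Rightarrow> nat \<Rightarrow> nat" where
  "sigmaI I j = (if \<exists>h\<in>{1..card I}. j = idx I (h - 1) + 1
     then idx I (THE h. h \<in> {1..card I} \<and> j = idx I (h - 1) + 1)
     else j - 1)"

definition tildeI :: "nat set \<Rightarrow> nat \<Rightarrow> nat set" where
  "tildeI I j = (if j \<in> I
     then I \<union> {1..idx I ((THE h. h \<in> {1..card I} \<and> j = idx I h) - 1)}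
     else I \<union> {1..j - 1})"

definition shift_perm :: "nat \<Rightarrow> (nat \<Rightarrow> nat) \<Rightarrow> bool" where
  "shift_perm m \<sigma> \<longleftrightarrow> bij_betw \<sigma> {1..m} {1..m} \<and> (\<forall>j\<in>{1..m}. j - 1 \<le> \<sigma> j)"

definition reorder :: "nat \<Rightarrow> (nat \<Rightarrow> pgraph) \<Rightarrow> (nat \<Rightarrow> nat) \<Rightarrow> pgraph list" where
  "reorder m G \<sigma> = map (\<lambda>j. G (\<sigma> j)) [1..<m+1]"

end

theory Submission
  imports Defs
begin


definition is_comp :: "pgraph \<Rightarrow> pgraph \<Rightarrow> bool" where
  "is_comp G C \<longleftrightarrow> (\<exists>l r. l \<le> r \<and> C = {l..r} \<and> {l..r} \<subseteq> G \<and> l - 1 \<notin> G \<and> r + 1 \<notin> G)"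

lemma comp_subset: "comp G i \<subseteq> G"
  unfolding comp_def by auto

lemma comp_self: "i \<in> G \<Longrightarrow> i \<in> comp G i"
  unfolding comp_def by auto

lemma comp_interval_max:
  assumes "l \<le> r" "{l..r} \<subseteq> G" "l - 1 \<notin> G" "r + 1 \<notin> G" "i \<in> {l..r}"
  shows "comp G i = {l..r}"
proof
  show "{l..r} \<subseteq> comp G i"
  proof
    fix j assume j: "j \<in> {l..r}"
    have "{min i j..max i j} \<subseteq> {l..r}" using j assms(5) by auto
    then have "{min i j..max i j} \<subseteq> G" using assms(2) by (rule order_trans)
    then show "j \<in> comp G i" unfolding comp_def by simp
  qed
  show "comp G i \<subseteq> {l..r}"
  proof
    fix j assume "j \<in> comp G i"
    hence h: "{min i j..max i j} \<subseteq> G" by (simp add: comp_def)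
    show "j \<in> {l..r}"
    proof (rule ccontr)
      assume "j \<notin> {l..r}"
      then have "j > r \<or> j < l" by auto
      then show False
      proof
        assume "j > r" then have "r+1 \<in> {min i j..max i j}" using assms(5) by auto
        then have "r+1 \<in> G" using h by blast
        with assms(4) show False by simp
      next
        assume "j < l" then have "l-1 \<in> {min i j..max i j}" using assms(5) by auto
        then have "l-1 \<in> G" using h by blast
        with assms(3) show False by simp
      qed
    qed
  qed
qed

lemma comp_finite: "finite G \<Longrightarrow> finite (comp G i)" using comp_subset finite_subset by blast

lemma comp_is_comp:
  assumes "finite G" "i \<in> G"
  shows "is_comp G (comp G i)"
proof -
  let ?C = "comp G i"
  have fin: "finite ?C" using assms comp_finite by blast
  have iC: "i \<in> ?C" using assms comp_self by blast
  define l where "l = Min ?C"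
  define r where "r = Max ?C"
  have lC: "l \<in> ?C" unfolding l_def using fin iC Min_in by blast
  have rC: "r \<in> ?C" unfolding r_def using fin iC Max_in by blast
  have li: "l \<le> i" unfolding l_def using fin iC by simp
  have ri: "i \<le> r" unfolding r_def using fin iC by simp
  have lG: "{l..i} \<subseteq> G" using lC li unfolding comp_def by auto
  have rG: "{i..r} \<subseteq> G" using rC ri unfolding comp_def by auto
  have lrG: "{l..r} \<subseteq> G"
  proof
    fix x assume "x \<in> {l..r}"
    then have "x \<in> {l..i} \<or> x \<in> {i..r}" by auto
    then show "x \<in> G" using lG rG by blast
  qed
  have eq: "?C = {l..r}"
  proof
    show "?C \<subseteq> {l..r}" unfolding l_def r_def using fin by auto
    show "{l..r} \<subseteq> ?C"
    proof
      fix x assume x: "x \<in> {l..r}"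
      have "{min i x..max i x} \<subseteq> {l..r}" using x li ri by auto
      then have "{min i x..max i x} \<subseteq> G" using lrG by (rule order_trans)
      then show "x \<in> ?C" unfolding comp_def by simp
    qed
  qed
  have l1: "l - 1 \<notin> G"
  proof
    assume "l - 1 \<in> G"
    then have "{l-1..i} \<subseteq> G" using lG by (auto simp: atLeastAtMost_iff) (smt (verit) atLeastAtMost_iff subsetD)
    then have "l - 1 \<in> ?C" using li unfolding comp_def by auto
    then show False using eq by auto
  qed
  have r1: "r + 1 \<notin> G"
  proof
    assume "r + 1 \<in> G"
    then have "{i..r+1} \<subseteq> G" using rG by (auto simp: atLeastAtMost_iff) (smt (verit) atLeastAtMost_iff subsetD)
    then have "r + 1 \<in> ?C" using ri unfolding comp_def by auto
    then show False using eq by auto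
  qed
  show ?thesis unfolding is_comp_def using eq li ri lrG l1 r1 by (intro exI[of _ l] exI[of _ r]) auto
qed

lemma components_char:
  assumes "finite G"
  shows "C \<in> components G \<longleftrightarrow> is_comp G C"
proof
  assume "C \<in> components G"
  then obtain i where "i \<in> G" "C = comp G i" unfolding components_def by auto
  then show "is_comp G C" using comp_is_comp assms by blast
next
  assume "is_comp G C"
  then obtain l r where h: "l \<le> r" "C = {l..r}" "{l..r} \<subseteq> G" "l - 1 \<notin> G" "r + 1 \<notin> G"
    unfolding is_comp_def by blast
  then have "comp G l = C" using comp_interval_max[of l r G l] by auto
  moreover have "l \<in> G" using h by auto
  ultimately show "C \<in> components G" unfolding components_def by auto
qed

lemma verts_interval: "l \<le> r \<Longrightarrow> verts {l..r} = {l-1..r}"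
  unfolding verts_def by auto

lemma verts_mono: "A \<subseteq> B \<Longrightarrow> verts A \<subseteq> verts B"
  unfolding verts_def by auto

lemma verts_UN: "verts (\<Union>A) = \<Union> (verts ` A)"
  unfolding verts_def by auto

lemma finite_components: "finite G \<Longrightarrow> finite (components G)"
  unfolding components_def by auto

lemma components_nonempty: "C \<in> components G \<Longrightarrow> C \<noteq> {}"
  unfolding components_def using comp_self by blast

lemma components_subset: "C \<in> components G \<Longrightarrow> C \<subseteq> G"
  unfolding components_def using comp_subset by blast

lemma components_Union_sub:
  assumes fin: "finite G" and sub: "\<C> \<subseteq> components G"
  shows "components (\<Union>\<C>) = \<C>"
proof -
  have HG: "\<Union>\<C> \<subseteq> G" using sub components_subset by blast
  have finH: "finite (\<Union>\<C>)" using HG fin finite_subset by blast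
  show ?thesis
  proof
    show "\<C> \<subseteq> components (\<Union>\<C>)"
    proof
      fix C assume "C \<in> \<C>"
      then have "is_comp G C" using sub components_char fin by blast
      then obtain l r where h: "l \<le> r" "C = {l..r}" "{l..r} \<subseteq> G" "l - 1 \<notin> G" "r + 1 \<notin> G"
        unfolding is_comp_def by blast
      have "is_comp (\<Union>\<C>) C" unfolding is_comp_def
        using h \<open>C \<in> \<C>\<close> HG by (intro exI[of _ l] exI[of _ r]) auto
      then show "C \<in> components (\<Union>\<C>)" using components_char finH by blast
    qed
    show "components (\<Union>\<C>) \<subseteq> \<C>"
    proof
      fix C assume "C \<in> components (\<Union>\<C>)"
      then have "is_comp (\<Union>\<C>) C" using components_char finH by blast
      then obtain l r where h: "l \<le> r" "C = {l..r}" "{l..r} \<subseteq> \<Union>\<C>" "l - 1 \<notin> \<Union>\<C>" "r + 1 \<notin> \<Union>\<C>"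
        unfolding is_comp_def by blast
      then obtain C' where C': "C' \<in> \<C>" "l \<in> C'" by auto
      then have "is_comp G C'" using sub components_char fin by blast
      then obtain l' r' where h': "l' \<le> r'" "C' = {l'..r'}" "{l'..r'} \<subseteq> G" "l' - 1 \<notin> G" "r' + 1 \<notin> G"
        unfolding is_comp_def by blast
      have "l' \<ge> l"
      proof (rule ccontr)
        assume "\<not> l' \<ge> l" then have "l - 1 \<in> C'" using h' C' by auto
        then show False using h C' by auto
      qed
      moreover have "r' \<le> r"
      proof (rule ccontr)
        assume "\<not> r' \<le> r" then have "r + 1 \<in> C'" using h h' C' by auto
        then show False using h C' by auto
      qed
      moreover have "r \<le> r'"
      proof (rule ccontr)
        assume "\<not> r \<le> r'" then have "r' + 1 \<in> {l..r}" using h' C' by auto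
        then show False using h(3) h'(5) HG by blast
      qed
      ultimately have "C = C'" using h h' C' by auto
      then show "C \<in> \<C>" using C' by simp
    qed
  qed
qed

lemma components_ominus:
  assumes "finite G"
  shows "components (ominus G B) = {C \<in> components G. verts C \<inter> verts B = {}}"
  unfolding ominus_def by (rule components_Union_sub[OF assms]) auto

lemma finite_ominus: "finite G \<Longrightarrow> finite (ominus G B)"
  unfolding ominus_def using components_subset finite_subset
  by (smt (verit, ccfv_SIG) Sup_le_iff mem_Collect_eq)

lemma Delta_ominus:
  assumes "finite G"
  shows "Delta (ominus G B) = card {C \<in> components G. verts C \<inter> verts B = {}}"
  unfolding Delta_def using components_ominus[OF assms] by simp

lemma Delta_ominus_mono:
  assumes "finite G" "B \<subseteq> B'"
  shows "Delta (ominus G B') \<le> Delta (ominus G B)"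
proof -
  have "verts B \<subseteq> verts B'" using assms verts_mono by blast
  then have "{C \<in> components G. verts C \<inter> verts B' = {}} \<subseteq> {C \<in> components G. verts C \<inter> verts B = {}}"
    by auto
  moreover have "finite {C \<in> components G. verts C \<inter> verts B = {}}"
    using finite_components[OF assms(1)] by auto
  ultimately show ?thesis unfolding Delta_ominus[OF assms(1)] by (rule card_mono[rotated])
qed

lemma lam_ge_card:
  assumes "finite H" "C \<in> components H"
  shows "card C \<le> lam H"
proof -
  have "H \<noteq> {}" using assms components_nonempty components_subset by blast
  then show ?thesis unfolding lam_def using assms finite_components by auto
qed

lemma lam_ominus_ge:
  assumes "finite G" "C \<in> components G" "verts C \<inter> verts B = {}"
  shows "card C \<le> lam (ominus G B)"
  using lam_ge_card[OF finite_ominus[OF assms(1)]] components_ominus[OF assms(1)] assms by auto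

lemma lam_ominus_mono:
  assumes "finite G" "B \<subseteq> B'"
  shows "lam (ominus G B') \<le> lam (ominus G B)"
proof (cases "ominus G B' = {}")
  case True then show ?thesis unfolding lam_def by simp
next
  case False
  then obtain C where C: "C \<in> components (ominus G B')"
    using components_def by (metis comp_self image_eqI all_not_in_conv)
  have "verts B \<subseteq> verts B'" using assms verts_mono by blast
  then have sub: "components (ominus G B') \<subseteq> components (ominus G B)"
    using components_ominus[OF assms(1)] by auto
  have ne: "ominus G B \<noteq> {}" using C sub components_nonempty components_subset by blast
  have "lam (ominus G B') = Max (card ` components (ominus G B'))" using False unfolding lam_def by simp
  also have "\<dots> \<le> Max (card ` components (ominus G B))"
    using C sub finite_components[OF finite_ominus[OF assms(1)]] by (intro Max_mono) auto
  also have "\<dots> = lam (ominus G B)" using ne unfolding lam_def by simp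
  finally show ?thesis .
qed



lemma reorder_eq: "reorder m G \<sigma> = map (G \<circ> \<sigma>) [1..<m+1]"
  unfolding reorder_def by (simp add: o_def)

lemma vec_parts_map:
  "vec_parts (map F [1..<m+1]) = map (\<lambda>l. ominus (F (Suc l)) (\<Union> (F ` {1..<Suc l}))) [0..<m]"
proof -
  let ?Hs = "map F [1..<m+1]"
  have len: "length ?Hs = m" by simp
  have "\<And>l. l \<in> set [0..<m] \<Longrightarrow> ominus (?Hs ! l) (\<Union> (set (take l ?Hs))) = ominus (F (Suc l)) (\<Union> (F ` {1..<Suc l}))"
  proof -
    fix l assume "l \<in> set [0..<m]" then have l: "l < m" by simp
    have "?Hs ! l = F (Suc l)" using l by (simp del: upt_Suc)
    moreover have "take l ?Hs = map F [1..<Suc l]" using l by (simp add: take_map take_upt del: upt_Suc)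
    ultimately show "ominus (?Hs ! l) (\<Union> (set (take l ?Hs))) = ominus (F (Suc l)) (\<Union> (F ` {1..<Suc l}))"
      by (simp del: upt_Suc)
  qed
  then show ?thesis unfolding vec_parts_def len by (intro map_cong) auto
qed

lemma sum_shift1: "(\<Sum>l\<in>set [0..<m]. f (Suc l)) = (\<Sum>p\<in>{1..m}. f p)"
proof -
  have "(\<Sum>p\<in>{1..m}. f p) = (\<Sum>k<m. f (Suc k))" using sum.atLeast1_atMost_eq[of f m] by simp
  then show ?thesis by (simp add: atLeast0LessThan)
qed

lemma vecDelta_map:
  "vecDelta (map F [1..<m+1]) = (\<Sum>p\<in>{1..m}. Delta (ominus (F p) (\<Union> (F ` {1..<p}))))"
  unfolding vecDelta_def vec_parts_map map_map interv_sum_list_conv_sum_set_nat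
  by (subst sum_shift1[symmetric]) (rule sum.cong, auto)

lemma vecLambda_map:
  "vecLambda (map F [1..<m+1]) = (\<Sum>p\<in>{1..m}. lam (ominus (F p) (\<Union> (F ` {1..<p}))))"
  unfolding vecLambda_def vec_parts_map map_map interv_sum_list_conv_sum_set_nat
  by (subst sum_shift1[symmetric]) (rule sum.cong, auto)

lemma Union_vec_parts_map:
  "\<Union> (set (vec_parts (map F [1..<m+1]))) = (\<Union>p\<in>{1..m}. ominus (F p) (\<Union> (F ` {1..<p})))"
proof -
  have "set (vec_parts (map F [1..<m+1])) = (\<lambda>l. ominus (F (Suc l)) (\<Union> (F ` {1..<Suc l}))) ` {0..<m}"
    unfolding vec_parts_map by simp
  also have "\<dots> = (\<lambda>p. ominus (F p) (\<Union> (F ` {1..<p}))) ` {1..m}"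
  proof -
    have "{1..m} = Suc ` {0..<m}" by (auto simp: image_iff)
    then show ?thesis by (simp only: image_image)
  qed
  finally show ?thesis by simp
qed



definition nxt :: "nat set \<Rightarrow> nat \<Rightarrow> nat" where "nxt I x = Min {y \<in> I. x < y}"
definition prd :: "nat set \<Rightarrow> nat \<Rightarrow> nat" where "prd I q = Max (insert 0 {x \<in> I. x < q})"

lemma sl_basic:
  assumes "finite I"
  shows "set (sorted_list_of_set I) = I" "length (sorted_list_of_set I) = card I"
    "distinct (sorted_list_of_set I)"
    "\<And>i j. i < j \<Longrightarrow> j < length (sorted_list_of_set I) \<Longrightarrow> sorted_list_of_set I ! i < sorted_list_of_set I ! j"
  using assms apply simp_all
  by (rule sorted_wrt_nth_less[OF strict_sorted_list_of_set]) auto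

lemma sl_le:
  assumes "finite I" "i \<le> j" "j < length (sorted_list_of_set I)"
  shows "sorted_list_of_set I ! i \<le> sorted_list_of_set I ! j"
  using sl_basic(4)[OF assms(1), of i j] assms by (cases "i = j") auto

lemma idx_inj:
  assumes I: "I \<subseteq> {1..m}" and a: "a \<le> card I" and b: "b \<le> card I" and eq: "idx I a = idx I b"
  shows "a = b"
proof -
  have fin: "finite I" using I finite_subset by blast
  let ?xs = "sorted_list_of_set I"
  have pos: "\<And>i. i < card I \<Longrightarrow> ?xs ! i \<ge> 1"
  proof -
    fix i assume "i < card I"
    then have "i < length ?xs" using sl_basic(2)[OF fin] by simp
    then have "?xs ! i \<in> set ?xs" by (rule nth_mem)
    then have "?xs ! i \<in> I" using sl_basic(1)[OF fin] by simp
    then show "?xs ! i \<ge> 1" using I by auto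
  qed
  show ?thesis
  proof (cases "a = 0")
    case True
    show ?thesis
    proof (rule ccontr)
      assume "a \<noteq> b"
      then have "b \<noteq> 0" using True by simp
      then have "idx I b \<ge> 1" unfolding idx_def using pos b by simp
      moreover have "idx I a = 0" using True unfolding idx_def by simp
      ultimately show False using eq by simp
    qed
  next
    case False
    show ?thesis
    proof (cases "b = 0")
      case True
      then have "idx I a \<ge> 1" unfolding idx_def using pos a False by simp
      moreover have "idx I b = 0" using True unfolding idx_def by simp
      ultimately show ?thesis using eq by simp
    next
      case False': False
      then have "?xs ! (a - 1) = ?xs ! (b - 1)" using eq False unfolding idx_def by simp
      moreover have "a - 1 < length ?xs" using a False sl_basic(2)[OF fin] by simp
      moreover have "b - 1 < length ?xs" using b False' sl_basic(2)[OF fin] by simp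
      ultimately have "a - 1 = b - 1" using nth_eq_iff_index_eq[OF sl_basic(3)[OF fin]] by blast
      then show ?thesis using False False' by simp
    qed
  qed
qed

lemma nxt_eqI:
  assumes "finite I" "q \<in> I" "x < q" "\<And>y. y \<in> I \<Longrightarrow> x < y \<Longrightarrow> q \<le> y"
  shows "nxt I x = q"
  unfolding nxt_def using assms by (intro Min_eqI) auto

lemma sigmaI_char:
  assumes I: "I \<subseteq> {1..m}" "m \<in> I" and p: "p \<in> {1..m}"
  shows "sigmaI I p = (if p - 1 \<in> insert 0 I then nxt I (p - 1) else p - 1)"
proof -
  have fin: "finite I" using I finite_subset by blast
  define xs where "xs = sorted_list_of_set I"
  have set: "set xs = I" and len: "length xs = card I" and dist: "distinct xs"
    and lt: "\<And>i j. i < j \<Longrightarrow> j < length xs \<Longrightarrow> xs!i < xs!j"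
    using sl_basic[OF fin] unfolding xs_def by auto
  have le: "\<And>i j. i \<le> j \<Longrightarrow> j < length xs \<Longrightarrow> xs!i \<le> xs!j"
    using sl_le[OF fin] unfolding xs_def by blast
  have idx: "\<And>h. idx I h = (if h = 0 then 0 else xs!(h-1))" by (simp add: idx_def xs_def)
  have n1: "card I \<ge> 1" using I fin by (auto simp: Suc_le_eq card_gt_0_iff)
  define P where "P h \<longleftrightarrow> h \<in> {1..card I} \<and> p = idx I (h - 1) + 1" for h
  show ?thesis
  proof (cases "p - 1 \<in> insert 0 I")
    case True
    have "\<exists>h. P h \<and> idx I h = nxt I (p - 1)"
    proof (cases "p - 1 = 0")
      case True
      have "P 1" unfolding P_def using n1 True p idx by auto
      moreover have "idx I 1 = nxt I (p - 1)"
      proof -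
        have "0 < length xs" using len n1 by simp
        then have "xs ! 0 \<in> set xs" by (rule nth_mem)
        then have x0: "xs ! 0 \<in> I" using set by simp
        have "nxt I 0 = xs ! 0"
        proof (rule nxt_eqI[OF fin x0])
          show "0 < xs ! 0" using x0 I by auto
          fix y assume "y \<in> I" "0 < y"
          then have "y \<in> set xs" using set by simp
          then obtain j where "j < length xs" "y = xs ! j" by (auto simp: in_set_conv_nth)
          then show "xs ! 0 \<le> y" using le[of 0 j] by simp
        qed
        then show ?thesis using True idx by simp
      qed
      ultimately show ?thesis by blast
    next
      case False
      then have pI: "p - 1 \<in> I" using True by simp
      then have "p - 1 \<in> set xs" using set by simp
      then obtain i where i: "i < length xs" "xs ! i = p - 1" by (auto simp: in_set_conv_nth)
      have i2: "i + 1 < length xs"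
      proof (rule ccontr)
        assume "\<not> i + 1 < length xs"
        then have ii: "i = length xs - 1" using i by simp
        have "m \<in> set xs" using set I by simp
        then obtain j where "j < length xs" "xs ! j = m" by (auto simp: in_set_conv_nth)
        then have "m \<le> p - 1" using le[of j i] ii i by simp
        then show False using p by auto
      qed
      have "P (i + 2)" unfolding P_def using i i2 len idx p by auto
      moreover have "idx I (i + 2) = nxt I (p - 1)"
      proof -
        have "xs ! (i+1) \<in> set xs" using i2 by (rule nth_mem)
        then have x1: "xs ! (i+1) \<in> I" using set by simp
        have "nxt I (p - 1) = xs ! (i+1)"
        proof (rule nxt_eqI[OF fin x1])
          show "p - 1 < xs ! (i + 1)" using lt[of i "i+1"] i i2 by simp
          fix y assume "y \<in> I" "p - 1 < y"
          then have "y \<in> set xs" using set by simp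
          then obtain j where j: "j < length xs" "y = xs ! j" by (auto simp: in_set_conv_nth)
          have "i < j"
          proof (rule ccontr)
            assume "\<not> i < j" then have "xs ! j \<le> xs ! i" using le[of j i] i by simp
            then show False using j i \<open>p - 1 < y\<close> by simp
          qed
          then show "xs ! (i + 1) \<le> y" using le[of "i+1" j] j by simp
        qed
        then show ?thesis using idx by simp
      qed
      ultimately show ?thesis by blast
    qed
    then obtain h where hP: "P h" and hv: "idx I h = nxt I (p - 1)" by blast
    have uniq: "\<And>h'. P h' \<Longrightarrow> h' = h"
    proof -
      fix h' assume "P h'"
      then have "h' - 1 = h - 1" using hP idx_inj[OF I(1), of "h' - 1" "h - 1"] unfolding P_def by auto
      then show "h' = h" using hP \<open>P h'\<close> unfolding P_def by auto
    qed
    have the: "(THE h. P h) = h" by (rule the_equality[of P h, OF hP uniq])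
    have ex: "\<exists>h\<in>{1..card I}. p = idx I (h - 1) + 1" using hP unfolding P_def by blast
    have "sigmaI I p = idx I (THE h. P h)" unfolding sigmaI_def P_def using ex by simp
    then show ?thesis using the hv True by simp
  next
    case False
    have "\<not> (\<exists>h\<in>{1..card I}. p = idx I (h - 1) + 1)"
    proof
      assume "\<exists>h\<in>{1..card I}. p = idx I (h - 1) + 1"
      then obtain h where h: "h \<in> {1..card I}" "p = idx I (h - 1) + 1" by blast
      show False
      proof (cases "h = 1")
        case True then show False using h False idx by simp
      next
        case False
        then have "p - 1 = xs ! (h - 2)" using h idx by (simp add: numeral_2_eq_2)
        moreover have "h - 2 < length xs" using h len False by auto
        ultimately have "p - 1 \<in> set xs" using nth_mem by metis
        then have "p - 1 \<in> I" using set by simp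
        then show False using \<open>p - 1 \<notin> insert 0 I\<close> by simp
      qed
    qed
    then show ?thesis unfolding sigmaI_def using False by simp
  qed
qed


lemma nxt_props:
  assumes "I \<subseteq> {1..m}" "m \<in> I" "x < m"
  shows "nxt I x \<in> I" "x < nxt I x" "\<And>y. y \<in> I \<Longrightarrow> x < y \<Longrightarrow> nxt I x \<le> y"
proof -
  have fin: "finite I" using assms(1) finite_subset by blast
  have ne: "{y \<in> I. x < y} \<noteq> {}" using assms by auto
  have fin2: "finite {y \<in> I. x < y}" using fin by simp
  have "nxt I x \<in> {y \<in> I. x < y}" unfolding nxt_def using Min_in[OF fin2 ne] .
  then show "nxt I x \<in> I" "x < nxt I x" by auto
  show "\<And>y. y \<in> I \<Longrightarrow> x < y \<Longrightarrow> nxt I x \<le> y" unfolding nxt_def using fin2 by auto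
qed

lemma sig_range:
  assumes I: "I \<subseteq> {1..m}" "m \<in> I" and p: "p \<in> {1..m}"
  shows "sigmaI I p \<in> {1..m}" "p - 1 \<le> sigmaI I p"
proof -
  show "sigmaI I p \<in> {1..m}"
  proof (cases "p - 1 \<in> insert 0 I")
    case True
    then have "sigmaI I p = nxt I (p - 1)" using sigmaI_char[OF I p] by simp
    moreover have "nxt I (p - 1) \<in> I" using nxt_props[OF I, of "p - 1"] p by auto
    ultimately show ?thesis using I by auto
  next
    case False
    then show ?thesis using sigmaI_char[OF I p] p by auto
  qed
  show "p - 1 \<le> sigmaI I p"
  proof (cases "p - 1 \<in> insert 0 I")
    case True
    then have "sigmaI I p = nxt I (p - 1)" using sigmaI_char[OF I p] by simp
    moreover have "p - 1 < nxt I (p - 1)" using nxt_props[OF I, of "p - 1"] p by auto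
    ultimately show ?thesis by simp
  next
    case False
    then show ?thesis using sigmaI_char[OF I p] p by auto
  qed
qed

lemma sig_inj:
  assumes I: "I \<subseteq> {1..m}" "m \<in> I"
  shows "inj_on (sigmaI I) {1..m}"
proof
  fix p1 p2 assume p1: "p1 \<in> {1..m}" and p2: "p2 \<in> {1..m}" and eq: "sigmaI I p1 = sigmaI I p2"
  have n1: "\<And>p. p \<in> {1..m} \<Longrightarrow> p - 1 < m" by auto
  show "p1 = p2"
  proof (cases "p1 - 1 \<in> insert 0 I"; cases "p2 - 1 \<in> insert 0 I")
    assume a1: "p1 - 1 \<in> insert 0 I" and a2: "p2 - 1 \<in> insert 0 I"
    then have e: "nxt I (p1 - 1) = nxt I (p2 - 1)" using eq sigmaI_char[OF I p1] sigmaI_char[OF I p2] by simp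
    show "p1 = p2"
    proof (rule ccontr)
      assume "p1 \<noteq> p2"
      then have "p1 - 1 < p2 - 1 \<or> p2 - 1 < p1 - 1" using p1 p2 by auto
      then show False
      proof
        assume lt: "p1 - 1 < p2 - 1"
        then have "p2 - 1 \<in> I" using a2 by auto
        then have "nxt I (p1 - 1) \<le> p2 - 1" using nxt_props(3)[OF I n1[OF p1]] lt by blast
        moreover have "p2 - 1 < nxt I (p2 - 1)" using nxt_props(2)[OF I n1[OF p2]] .
        ultimately show False using e by simp
      next
        assume lt: "p2 - 1 < p1 - 1"
        then have "p1 - 1 \<in> I" using a1 by auto
        then have "nxt I (p2 - 1) \<le> p1 - 1" using nxt_props(3)[OF I n1[OF p2]] lt by blast
        moreover have "p1 - 1 < nxt I (p1 - 1)" using nxt_props(2)[OF I n1[OF p1]] .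
        ultimately show False using e by simp
      qed
    qed
  next
    assume a1: "p1 - 1 \<in> insert 0 I" and a2: "p2 - 1 \<notin> insert 0 I"
    then have "nxt I (p1 - 1) = p2 - 1" using eq sigmaI_char[OF I p1] sigmaI_char[OF I p2] by simp
    moreover have "nxt I (p1 - 1) \<in> I" using nxt_props(1)[OF I n1[OF p1]] .
    ultimately show "p1 = p2" using a2 by simp
  next
    assume a1: "p1 - 1 \<notin> insert 0 I" and a2: "p2 - 1 \<in> insert 0 I"
    then have "nxt I (p2 - 1) = p1 - 1" using eq sigmaI_char[OF I p1] sigmaI_char[OF I p2] by simp
    moreover have "nxt I (p2 - 1) \<in> I" using nxt_props(1)[OF I n1[OF p2]] .
    ultimately show "p1 = p2" using a1 by simp
  next
    assume a1: "p1 - 1 \<notin> insert 0 I" and a2: "p2 - 1 \<notin> insert 0 I"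
    then have "p1 - 1 = p2 - 1" using eq sigmaI_char[OF I p1] sigmaI_char[OF I p2] by simp
    then show "p1 = p2" using p1 p2 by auto
  qed
qed

lemma shift_perm_sigmaI:
  assumes I: "I \<subseteq> {1..m}" "m \<in> I"
  shows "shift_perm m (sigmaI I)"
proof -
  have sub: "sigmaI I ` {1..m} \<subseteq> {1..m}" using sig_range(1)[OF I] by auto
  have "sigmaI I ` {1..m} = {1..m}" using endo_inj_surj[OF _ sub sig_inj[OF I]] by simp
  then have "bij_betw (sigmaI I) {1..m} {1..m}" using sig_inj[OF I] unfolding bij_betw_def by simp
  then show ?thesis unfolding shift_perm_def using sig_range(2)[OF I] by auto
qed

lemma prd_props:
  assumes I: "I \<subseteq> {1..m}" and q: "q \<in> I"
  shows "prd I q \<in> insert 0 I" "prd I q < q" "\<And>x. x \<in> I \<Longrightarrow> x < q \<Longrightarrow> x \<le> prd I q"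
proof -
  have fin: "finite I" using I finite_subset by blast
  have fin2: "finite (insert 0 {x \<in> I. x < q})" using fin by simp
  have "prd I q \<in> insert 0 {x \<in> I. x < q}" unfolding prd_def by (rule Max_in[OF fin2]) simp
  moreover have "q > 0" using I q by auto
  ultimately show "prd I q \<in> insert 0 I" "prd I q < q" by auto
  show "\<And>x. x \<in> I \<Longrightarrow> x < q \<Longrightarrow> x \<le> prd I q" unfolding prd_def using fin2 by auto
qed

lemma sig_lead:
  assumes I: "I \<subseteq> {1..m}" "m \<in> I" and q: "q \<in> I"
  shows "prd I q + 1 \<in> {1..m}" "sigmaI I (prd I q + 1) = q"
proof -
  have fin: "finite I" using I finite_subset by blast
  have a: "prd I q \<in> insert 0 I" "prd I q < q" using prd_props[OF I(1) q] by auto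
  show pm: "prd I q + 1 \<in> {1..m}" using a q I by auto
  have "sigmaI I (prd I q + 1) = nxt I (prd I q)" using sigmaI_char[OF I pm] a by simp
  also have "\<dots> = q"
  proof (rule nxt_eqI[OF fin q a(2)])
    fix y assume "y \<in> I" "prd I q < y"
    then show "q \<le> y" using prd_props(3)[OF I(1) q, of y] by (cases "y < q") auto
  qed
  finally show "sigmaI I (prd I q + 1) = q" .
qed

lemma sig_before:
  assumes I: "I \<subseteq> {1..m}" "m \<in> I" and q: "q \<in> I" and p: "p \<in> {1..prd I q}"
  shows "sigmaI I p \<in> {1..prd I q}"
proof -
  have a: "prd I q \<in> insert 0 I" "prd I q < q" using prd_props[OF I(1) q] by auto
  have pq: "prd I q \<in> I" using a p by auto
  have pm: "p \<in> {1..m}" using p pq I by auto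
  have "sigmaI I p \<le> prd I q"
  proof (cases "p - 1 \<in> insert 0 I")
    case True
    then have "sigmaI I p = nxt I (p - 1)" using sigmaI_char[OF I pm] by simp
    moreover have "nxt I (p - 1) \<le> prd I q" using nxt_props(3)[OF I, of "p - 1" "prd I q"] pq p pm by auto
    ultimately show ?thesis by simp
  next
    case False
    then show ?thesis using sigmaI_char[OF I pm] p by auto
  qed
  then show ?thesis using sig_range(1)[OF I pm] by auto
qed

lemma prd_inj:
  assumes I: "I \<subseteq> {1..m}"
  shows "inj_on (\<lambda>q. prd I q + 1) I"
proof
  fix q1 q2 assume q1: "q1 \<in> I" and q2: "q2 \<in> I" and e: "prd I q1 + 1 = prd I q2 + 1"
  show "q1 = q2"
  proof (rule ccontr)
    assume "q1 \<noteq> q2"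
    then have "q1 < q2 \<or> q2 < q1" by auto
    then show False
    proof
      assume "q1 < q2"
      then have "q1 \<le> prd I q2" using prd_props(3)[OF I q2 q1] by simp
      then show False using prd_props(2)[OF I q1] e by simp
    next
      assume "q2 < q1"
      then have "q2 \<le> prd I q1" using prd_props(3)[OF I q1 q2] by simp
      then show False using prd_props(2)[OF I q2] e by simp
    qed
  qed
qed

lemma tildeI_props:
  assumes I: "I \<subseteq> {1..m}" "m \<in> I" and j: "j \<in> {1..m}"
  shows "I \<subseteq> tildeI I j" "tildeI I j \<subseteq> {1..m}" "m \<in> tildeI I j"
proof -
  have fin: "finite I" using I finite_subset by blast
  let ?xs = "sorted_list_of_set I"
  show "I \<subseteq> tildeI I j" unfolding tildeI_def by auto
  then show "m \<in> tildeI I j" using I by auto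
  show "tildeI I j \<subseteq> {1..m}"
  proof (cases "j \<in> I")
    case True
    then have "j \<in> set ?xs" using sl_basic(1)[OF fin] by simp
    then obtain i where i: "i < length ?xs" "?xs ! i = j" by (auto simp: in_set_conv_nth)
    let ?P = "\<lambda>h. h \<in> {1..card I} \<and> j = idx I h"
    have Pi: "?P (i + 1)" using i sl_basic(2)[OF fin] unfolding idx_def by auto
    have uniq: "\<And>h. ?P h \<Longrightarrow> h = i + 1"
      using idx_inj[OF I(1)] Pi by (metis atLeastAtMost_iff)
    have the: "(THE h. ?P h) = i + 1" by (rule the_equality[of ?P, OF Pi uniq])
    have "idx I i \<le> m"
    proof (cases "i = 0")
      case True then show ?thesis unfolding idx_def by simp
    next
      case False
      then have "i - 1 < length ?xs" using i by simp
      then have "?xs ! (i - 1) \<in> set ?xs" by (rule nth_mem)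
      then have "?xs ! (i - 1) \<in> I" using sl_basic(1)[OF fin] by simp
      then show ?thesis using I False unfolding idx_def by auto
    qed
    then show ?thesis using True the I unfolding tildeI_def by auto
  next
    case False
    then show ?thesis using I j unfolding tildeI_def by auto
  qed
qed



lemma pos_image_sub:
  assumes I: "I \<subseteq> {1..m}" "m \<in> I"
  shows "(\<lambda>q. prd I q + 1) ` I \<subseteq> {1..m}"
  using sig_lead(1)[OF I] by auto

lemma lead_part_sub:
  assumes I: "I \<subseteq> {1..m}" "m \<in> I" and q: "q \<in> I"
  shows "\<Union> ((G \<circ> sigmaI I) ` {1..<prd I q + 1}) \<subseteq> \<Union> (G ` {1..prd I q})"
proof -
  have "{1..<prd I q + 1} = {1..prd I q}" by auto
  then have "sigmaI I ` {1..<prd I q + 1} \<subseteq> {1..prd I q}" using sig_before[OF I q] by auto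
  then have "(G \<circ> sigmaI I) ` {1..<prd I q + 1} \<subseteq> G ` {1..prd I q}" unfolding image_comp[symmetric] by (rule image_mono)
  then show ?thesis by (rule Union_mono)
qed

lemma vecDelta_lower:
  assumes fin: "\<forall>i\<in>{1..m}. finite (G i)" and I: "I \<subseteq> {1..m}" "m \<in> I"
  shows "(\<Sum>q\<in>I. Delta (ominus (G q) (\<Union> (G ` {1..<q})))) \<le> vecDelta (reorder m G (sigmaI I))"
proof -
  define f where "f p = Delta (ominus ((G \<circ> sigmaI I) p) (\<Union> ((G \<circ> sigmaI I) ` {1..<p})))" for p
  have "(\<Sum>q\<in>I. Delta (ominus (G q) (\<Union> (G ` {1..<q})))) \<le> (\<Sum>q\<in>I. f (prd I q + 1))"
  proof (rule sum_mono)
    fix q assume q: "q \<in> I"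
    have finq: "finite (G q)" using fin I q by auto
    have "\<Union> ((G \<circ> sigmaI I) ` {1..<prd I q + 1}) \<subseteq> \<Union> (G ` {1..<q})"
    proof -
      have "{1..prd I q} \<subseteq> {1..<q}" using prd_props(2)[OF I(1) q] by auto
      then have "\<Union> (G ` {1..prd I q}) \<subseteq> \<Union> (G ` {1..<q})" by (intro Union_mono image_mono)
      then show ?thesis using lead_part_sub[OF I q, of G] by (rule order_trans[rotated])
    qed
    then have "Delta (ominus (G q) (\<Union> (G ` {1..<q}))) \<le> Delta (ominus (G q) (\<Union> ((G \<circ> sigmaI I) ` {1..<prd I q + 1})))"
      by (rule Delta_ominus_mono[OF finq])
    then show "Delta (ominus (G q) (\<Union> (G ` {1..<q}))) \<le> f (prd I q + 1)"
      unfolding f_def using sig_lead(2)[OF I q] by simp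
  qed
  also have "\<dots> = (\<Sum>p\<in>(\<lambda>q. prd I q + 1) ` I. f p)"
    using sum.reindex[OF prd_inj[OF I(1)], of f] by (simp add: o_def)
  also have "\<dots> \<le> (\<Sum>p\<in>{1..m}. f p)"
    by (rule sum_mono2[OF _ pos_image_sub[OF I]]) simp_all
  also have "\<dots> = vecDelta (reorder m G (sigmaI I))"
    unfolding reorder_eq vecDelta_map f_def ..
  finally show ?thesis .
qed

lemma vecLambda_lower:
  assumes fin: "\<forall>i\<in>{1..m}. finite (G i)" and I: "I \<subseteq> {1..m}" "m \<in> I" and Q: "Q \<subseteq> I"
  shows "(\<Sum>q\<in>Q. lam (ominus (G q) (\<Union> (G ` {1..prd I q})))) \<le> vecLambda (reorder m G (sigmaI I))"
proof -
  define f where "f p = lam (ominus ((G \<circ> sigmaI I) p) (\<Union> ((G \<circ> sigmaI I) ` {1..<p})))" for p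
  have sub: "(\<lambda>q. prd I q + 1) ` Q \<subseteq> {1..m}" using pos_image_sub[OF I] Q by blast
  have inj: "inj_on (\<lambda>q. prd I q + 1) Q" using prd_inj[OF I(1)] Q by (rule inj_on_subset)
  have "(\<Sum>q\<in>Q. lam (ominus (G q) (\<Union> (G ` {1..prd I q})))) \<le> (\<Sum>q\<in>Q. f (prd I q + 1))"
  proof (rule sum_mono)
    fix q assume q: "q \<in> Q"
    then have qI: "q \<in> I" using Q by blast
    have finq: "finite (G q)" using fin I qI by auto
    have "lam (ominus (G q) (\<Union> (G ` {1..prd I q}))) \<le> lam (ominus (G q) (\<Union> ((G \<circ> sigmaI I) ` {1..<prd I q + 1})))"
      by (rule lam_ominus_mono[OF finq lead_part_sub[OF I qI, of G]])
    then show "lam (ominus (G q) (\<Union> (G ` {1..prd I q}))) \<le> f (prd I q + 1)"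
      unfolding f_def using sig_lead(2)[OF I qI] by simp
  qed
  also have "\<dots> = (\<Sum>p\<in>(\<lambda>q. prd I q + 1) ` Q. f p)"
    using sum.reindex[OF inj, of f] by (simp add: o_def)
  also have "\<dots> \<le> (\<Sum>p\<in>{1..m}. f p)"
    by (rule sum_mono2[OF _ sub]) simp_all
  also have "\<dots> = vecLambda (reorder m G (sigmaI I))"
    unfolding reorder_eq vecLambda_map f_def ..
  finally show ?thesis .
qed



definition PP :: "(nat \<Rightarrow> pgraph) \<Rightarrow> nat \<Rightarrow> pgraph" where
  "PP G i = ominus (G i) (\<Union> (G ` {1..<i}))"
definition UU :: "(nat \<Rightarrow> pgraph) \<Rightarrow> nat \<Rightarrow> pgraph" where
  "UU G m = (\<Union>i\<in>{1..m}. PP G i)"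

lemma gap_eq: "gap k (reorder m G id) = (SUP y\<in>{0..real k}. Min ((\<lambda>C. \<bar>midpoint C - y\<bar>) ` components (UU G m)))"
proof -
  have "reorder m G id = map G [1..<m+1]" unfolding reorder_eq by simp
  then show ?thesis unfolding gap_def Let_def UU_def PP_def by (simp only: Union_vec_parts_map)
qed

lemma mem_ominus: "x \<in> ominus G B \<longleftrightarrow> (\<exists>C\<in>components G. verts C \<inter> verts B = {} \<and> x \<in> C)"
  unfolding ominus_def by auto

lemma comp_of_mem:
  assumes "finite H" "C \<in> components H" "e \<in> C"
  shows "comp H e = C"
proof -
  have "is_comp H C" using assms components_char by blast
  then obtain l r where h: "l \<le> r" "C = {l..r}" "{l..r} \<subseteq> H" "l - 1 \<notin> H" "r + 1 \<notin> H"
    unfolding is_comp_def by blast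
  then show ?thesis using comp_interval_max[of l r H e] assms(3) by simp
qed

lemma finite_PP: "\<forall>i\<in>{1..m}. finite (G i) \<Longrightarrow> i \<in> {1..m} \<Longrightarrow> finite (PP G i)"
  unfolding PP_def using finite_ominus by blast

lemma finite_UU: "\<forall>i\<in>{1..m}. finite (G i) \<Longrightarrow> finite (UU G m)"
  unfolding UU_def using finite_PP by blast

lemma comp_PP_in_UU:
  assumes fin: "\<forall>i\<in>{1..m}. finite (G i)" and i: "i \<in> {1..m}" and C: "C \<in> components (PP G i)"
  shows "C \<in> components (UU G m)"
proof -
  have finG: "finite (G i)" using fin i by blast
  have C1: "C \<in> components (G i)" and C2: "verts C \<inter> verts (\<Union> (G ` {1..<i})) = {}"
    using C components_ominus[OF finG] unfolding PP_def by auto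
  have "is_comp (G i) C" using C1 components_char finG by blast
  then obtain l r where h: "l \<le> r" "C = {l..r}" "{l..r} \<subseteq> G i" "l - 1 \<notin> G i" "r + 1 \<notin> G i"
    unfolding is_comp_def by blast
  have CU: "C \<subseteq> UU G m" using C components_subset i unfolding UU_def by blast
  have key: "\<And>x v. x \<notin> G i \<Longrightarrow> v \<in> verts C \<Longrightarrow> v \<in> verts {x} \<Longrightarrow> v \<in> verts (G i) \<Longrightarrow> x \<notin> UU G m"
  proof
    fix x v assume x: "x \<notin> G i" and v1: "v \<in> verts C" and v2: "v \<in> verts {x}" and v3: "v \<in> verts (G i)"
      and xU: "x \<in> UU G m"
    then obtain i' where i': "i' \<in> {1..m}" "x \<in> PP G i'" unfolding UU_def by blast
    have finG': "finite (G i')" using fin i' by blast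
    obtain C' where C': "C' \<in> components (G i')" "verts C' \<inter> verts (\<Union> (G ` {1..<i'})) = {}" "x \<in> C'"
      using i'(2) unfolding PP_def mem_ominus by blast
    have xG': "x \<in> G i'" using C' components_subset by blast
    have "i' \<noteq> i" using xG' x by blast
    then have "i' < i \<or> i < i'" by auto
    then show False
    proof
      assume "i' < i"
      then have "x \<in> \<Union> (G ` {1..<i})" using xG' i' by auto
      then have "verts {x} \<subseteq> verts (\<Union> (G ` {1..<i}))" by (intro verts_mono) auto
      then show False using C2 v1 v2 by blast
    next
      assume "i < i'"
      then have "G i \<subseteq> \<Union> (G ` {1..<i'})" using i by auto
      then have "v \<in> verts (\<Union> (G ` {1..<i'}))" using v3 verts_mono by blast
      moreover have "v \<in> verts C'" using v2 C'(3) verts_mono[of "{x}" C'] by blast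
      ultimately show False using C'(2) by blast
    qed
  qed
  have r1: "r + 1 \<notin> UU G m"
  proof (rule key[OF h(5)])
    show "r \<in> verts C" "r \<in> verts {r + 1}" "r \<in> verts (G i)" using h unfolding verts_def by auto
  qed
  have l1: "l - 1 \<notin> UU G m"
  proof (rule key[OF h(4)])
    show "l - 1 \<in> verts C" "l - 1 \<in> verts {l - 1}" "l - 1 \<in> verts (G i)" using h unfolding verts_def by auto
  qed
  have "is_comp (UU G m) C" unfolding is_comp_def using h CU l1 r1 by (intro exI[of _ l] exI[of _ r]) auto
  then show ?thesis using components_char finite_UU[OF fin] by blast
qed

lemma components_UU_sub:
  assumes fin: "\<forall>i\<in>{1..m}. finite (G i)"
  shows "components (UU G m) \<subseteq> (\<Union>i\<in>{1..m}. components (PP G i))"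
proof
  fix C assume "C \<in> components (UU G m)"
  then obtain e where e: "e \<in> UU G m" "C = comp (UU G m) e" unfolding components_def by blast
  then obtain i where i: "i \<in> {1..m}" "e \<in> PP G i" unfolding UU_def by blast
  let ?C' = "comp (PP G i) e"
  have C'P: "?C' \<in> components (PP G i)" using i unfolding components_def by blast
  have "?C' \<in> components (UU G m)" using comp_PP_in_UU[OF fin i(1) C'P] .
  moreover have "e \<in> ?C'" using comp_self i by blast
  ultimately have "comp (UU G m) e = ?C'" using comp_of_mem finite_UU[OF fin] by blast
  then show "C \<in> (\<Union>i\<in>{1..m}. components (PP G i))" using e C'P i by auto
qed

lemma card_components_UU:
  assumes fin: "\<forall>i\<in>{1..m}. finite (G i)"
  shows "card (components (UU G m)) \<le> (\<Sum>i\<in>{1..m}. Delta (PP G i))"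
proof -
  have "card (components (UU G m)) \<le> card (\<Union>i\<in>{1..m}. components (PP G i))"
    by (rule card_mono[OF _ components_UU_sub[OF fin]]) (use fin finite_PP finite_components in blast)
  also have "\<dots> \<le> (\<Sum>i\<in>{1..m}. card (components (PP G i)))" by (rule card_UN_le) simp
  finally show ?thesis unfolding Delta_def .
qed

lemma cover_len:
  fixes M :: "real set"
  assumes "finite M"
  shows "a \<le> b \<Longrightarrow> (\<forall>y\<in>{a..b}. \<exists>\<mu>\<in>M. \<bar>\<mu> - y\<bar> \<le> g) \<Longrightarrow> b - a \<le> 2 * g * real (card M)"
  using assms
proof (induction M arbitrary: b rule: finite_psubset_induct)
  case (psubset M)
  have ab: "a \<in> {a..b}" "b \<in> {a..b}" using psubset.prems(1) by auto
  obtain \<mu>a where \<mu>a: "\<mu>a \<in> M" "\<bar>\<mu>a - a\<bar> \<le> g" using psubset.prems(2) ab(1) by blast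
  obtain \<mu>b where \<mu>b: "\<mu>b \<in> M" "\<bar>\<mu>b - b\<bar> \<le> g" using psubset.prems(2) ab(2) by blast
  have g0: "g \<ge> 0" using \<mu>a by linarith
  have ne: "M \<noteq> {}" using \<mu>a by blast
  define \<mu> where "\<mu> = Max M"
  have \<mu>M: "\<mu> \<in> M" unfolding \<mu>_def using Max_in[OF psubset.hyps(1) ne] .
  have "\<mu>b \<le> \<mu>" unfolding \<mu>_def using psubset.hyps(1) \<mu>b by simp
  then have bmu: "b \<le> \<mu> + g" using \<mu>b by linarith
  have c1: "card M \<ge> 1" using ne psubset.hyps(1) by (simp add: Suc_le_eq card_gt_0_iff)
  show ?case
  proof (cases "\<mu> - g \<le> a")
    case True
    then have "b - a \<le> 2 * g" using bmu by linarith
    also have "\<dots> \<le> 2 * g * real (card M)"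
    proof -
      have "real (card M) \<ge> 1" using c1 by simp
      then show ?thesis using g0 by (metis mult.right_neutral mult_left_mono zero_le_mult_iff zero_le_numeral)
    qed
    finally show ?thesis .
  next
    case False
    let ?M' = "M - {\<mu>}"
    have sub: "?M' \<subset> M" using \<mu>M by blast
    have cM': "real (card ?M') = real (card M) - 1" using \<mu>M psubset.hyps(1) c1 by (simp add: of_nat_diff)
    have IH: "\<And>b'. a \<le> b' \<Longrightarrow> b' < \<mu> - g \<Longrightarrow> b' \<le> b \<Longrightarrow> b' - a \<le> 2 * g * real (card ?M')"
    proof -
      fix b' assume ab': "a \<le> b'" and b'mu: "b' < \<mu> - g" and b'b: "b' \<le> b"
      have cov: "\<forall>y\<in>{a..b'}. \<exists>\<mu>'\<in>?M'. \<bar>\<mu>' - y\<bar> \<le> g"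
      proof
        fix y assume y: "y \<in> {a..b'}"
        then have "y \<in> {a..b}" using b'b by auto
        then obtain \<mu>' where \<mu>': "\<mu>' \<in> M" "\<bar>\<mu>' - y\<bar> \<le> g" using psubset.prems(2) by blast
        have "\<mu>' \<noteq> \<mu>" using \<mu>' y b'mu by auto
        then show "\<exists>\<mu>'\<in>?M'. \<bar>\<mu>' - y\<bar> \<le> g" using \<mu>' by blast
      qed
      show "b' - a \<le> 2 * g * real (card ?M')"
        using psubset.IH[OF sub ab' cov] psubset.hyps(1) by simp
    qed
    show ?thesis
    proof (cases "b < \<mu> - g")
      case True
      then have "b - a \<le> 2 * g * real (card ?M')" using IH[of b] psubset.prems(1) by simp
      also have "\<dots> \<le> 2 * g * real (card M)" using cM' g0 by (intro mult_left_mono) auto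
      finally show ?thesis .
    next
      case bge: False
      have claim: "\<mu> - g - a \<le> 2 * g * real (card ?M')"
      proof (rule ccontr)
        assume neg: "\<not> ?thesis"
        define d where "d = \<mu> - g - a - 2 * g * real (card ?M')"
        have d: "d > 0" using neg unfolding d_def by linarith
        define b' where "b' = a + 2 * g * real (card ?M') + d / 2"
        have ab': "a \<le> b'" unfolding b'_def using d g0 by simp
        have "b' = \<mu> - g - d / 2" unfolding b'_def d_def by (simp add: field_simps)
        then have b'mu: "b' < \<mu> - g" using d by linarith
        have "b' - a \<le> 2 * g * real (card ?M')" using IH[OF ab' b'mu] b'mu bge by simp
        then show False unfolding b'_def using d by simp
      qed
      have "b - a = (b - (\<mu> - g)) + (\<mu> - g - a)" by simp
      also have "\<dots> \<le> 2 * g + 2 * g * real (card ?M')" using claim bmu by linarith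
      also have "\<dots> = 2 * g * real (card M)" unfolding cM' by (simp add: algebra_simps)
      finally show ?thesis .
    qed
  qed
qed



definition fy :: "(nat \<Rightarrow> pgraph) \<Rightarrow> nat \<Rightarrow> real \<Rightarrow> real" where
  "fy G m y = Min ((\<lambda>C. \<bar>midpoint C - y\<bar>) ` components (UU G m))"

lemma ominus_empty: "ominus G {} = G"
proof -
  have "verts {} = {}" unfolding verts_def by simp
  then have "ominus G {} = \<Union> (components G)" unfolding ominus_def by simp
  also have "\<dots> = G" unfolding components_def using comp_self comp_subset by blast
  finally show ?thesis .
qed

lemma UU_nonempty:
  assumes k: "k \<ge> 1" and U: "(\<Union>i\<in>{1..m}. G i) = {1..int k}"
  shows "UU G m \<noteq> {}"
proof -
  have "(1::int) \<in> {1..int k}" using k by simp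
  then obtain i where i: "i \<in> {1..m}" "G i \<noteq> {}" using U by blast
  define i0 where "i0 = (LEAST i. i \<in> {1..m} \<and> G i \<noteq> {})"
  have i0: "i0 \<in> {1..m}" "G i0 \<noteq> {}" unfolding i0_def using LeastI[of "\<lambda>i. i \<in> {1..m} \<and> G i \<noteq> {}"] i by auto
  have "\<And>j. j \<in> {1..<i0} \<Longrightarrow> G j = {}"
  proof -
    fix j assume j: "j \<in> {1..<i0}"
    then have "j \<in> {1..m}" using i0 by auto
    moreover have "\<not> (j \<in> {1..m} \<and> G j \<noteq> {})" using not_less_Least[of j] j unfolding i0_def by auto
    ultimately show "G j = {}" by blast
  qed
  then have "\<Union> (G ` {1..<i0}) = {}" by auto
  then have "PP G i0 = G i0" unfolding PP_def using ominus_empty by simp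
  then show ?thesis unfolding UU_def using i0 by blast
qed

lemma compU_props:
  assumes fin: "\<forall>i\<in>{1..m}. finite (G i)" and k: "k \<ge> 1" and U: "(\<Union>i\<in>{1..m}. G i) = {1..int k}"
  shows "finite (components (UU G m))" "components (UU G m) \<noteq> {}"
proof -
  show "finite (components (UU G m))" using finite_components finite_UU[OF fin] by blast
  obtain e where "e \<in> UU G m" using UU_nonempty[OF k U] by blast
  then show "components (UU G m) \<noteq> {}" unfolding components_def by blast
qed

lemma fy_le:
  assumes fin: "\<forall>i\<in>{1..m}. finite (G i)" and C: "C \<in> components (UU G m)"
  shows "fy G m y \<le> \<bar>midpoint C - y\<bar>"
  unfolding fy_def using C finite_components[OF finite_UU[OF fin]] by (intro Min_le) auto

lemma fy_attained:
  assumes fin: "\<forall>i\<in>{1..m}. finite (G i)" and k: "k \<ge> 1" and U: "(\<Union>i\<in>{1..m}. G i) = {1..int k}"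
  shows "\<exists>C\<in>components (UU G m). fy G m y = \<bar>midpoint C - y\<bar>"
proof -
  have "fy G m y \<in> (\<lambda>C. \<bar>midpoint C - y\<bar>) ` components (UU G m)"
    unfolding fy_def using compU_props[OF fin k U] by (intro Min_in) auto
  then show ?thesis by auto
qed

lemma fy_bdd:
  assumes fin: "\<forall>i\<in>{1..m}. finite (G i)" and k: "k \<ge> 1" and U: "(\<Union>i\<in>{1..m}. G i) = {1..int k}"
  shows "bdd_above (fy G m ` {0..real k})"
proof -
  obtain C where C: "C \<in> components (UU G m)" using compU_props(2)[OF fin k U] by blast
  show ?thesis
  proof (rule bdd_aboveI2)
    fix y assume "y \<in> {0..real k}"
    then have "\<bar>midpoint C - y\<bar> \<le> \<bar>midpoint C\<bar> + real k" by auto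
    then show "fy G m y \<le> \<bar>midpoint C\<bar> + real k" using fy_le[OF fin C, of y] by linarith
  qed
qed

lemma gap_upper:
  assumes fin: "\<forall>i\<in>{1..m}. finite (G i)" and k: "k \<ge> 1" and U: "(\<Union>i\<in>{1..m}. G i) = {1..int k}"
    and y: "y \<in> {0..real k}"
  shows "fy G m y \<le> gap k (reorder m G id)"
  unfolding gap_eq fy_def[symmetric] using y fy_bdd[OF fin k U] by (rule cSUP_upper)

lemma gap_approx:
  assumes fin: "\<forall>i\<in>{1..m}. finite (G i)" and k: "k \<ge> 1" and U: "(\<Union>i\<in>{1..m}. G i) = {1..int k}"
  shows "\<exists>y\<in>{0..real k}. gap k (reorder m G id) - 1/2 < fy G m y"
proof -
  have "gap k (reorder m G id) - 1/2 < gap k (reorder m G id)" by simp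
  then have "gap k (reorder m G id) - 1/2 < (SUP y\<in>{0..real k}. fy G m y)" unfolding gap_eq fy_def .
  then show ?thesis using less_cSUP_iff[of "{0..real k}" "fy G m"] fy_bdd[OF fin k U] by auto
qed

lemma gap_cover:
  assumes fin: "\<forall>i\<in>{1..m}. finite (G i)" and k: "k \<ge> 1" and U: "(\<Union>i\<in>{1..m}. G i) = {1..int k}"
  shows "real k \<le> 2 * gap k (reorder m G id) * real (\<Sum>i\<in>{1..m}. Delta (PP G i))"
    "gap k (reorder m G id) > 0"
proof -
  let ?g = "gap k (reorder m G id)"
  let ?M = "midpoint ` components (UU G m)"
  have finM: "finite ?M" using compU_props(1)[OF fin k U] by simp
  have cov: "\<forall>y\<in>{0..real k}. \<exists>\<mu>\<in>?M. \<bar>\<mu> - y\<bar> \<le> ?g"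
  proof
    fix y assume y: "y \<in> {0..real k}"
    obtain C where C: "C \<in> components (UU G m)" "fy G m y = \<bar>midpoint C - y\<bar>" using fy_attained[OF fin k U] by blast
    then show "\<exists>\<mu>\<in>?M. \<bar>\<mu> - y\<bar> \<le> ?g" using gap_upper[OF fin k U y] by auto
  qed
  have "real k - 0 \<le> 2 * ?g * real (card ?M)" using cover_len[OF finM _ cov] by simp
  moreover have "card ?M \<le> card (components (UU G m))" using card_image_le compU_props(1)[OF fin k U] by blast
  moreover have "card (components (UU G m)) \<le> (\<Sum>i\<in>{1..m}. Delta (PP G i))" using card_components_UU[OF fin] .
  ultimately have A: "real k \<le> 2 * ?g * real (card ?M)" and B: "card ?M \<le> (\<Sum>i\<in>{1..m}. Delta (PP G i))" by auto
  have g0: "?g > 0"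
  proof (rule ccontr)
    assume "\<not> ?g > 0"
    then have "2 * ?g * real (card ?M) \<le> 0" by (simp add: mult_nonpos_nonneg)
    then show False using A k by simp
  qed
  show "?g > 0" using g0 .
  have "2 * ?g * real (card ?M) \<le> 2 * ?g * real (\<Sum>i\<in>{1..m}. Delta (PP G i))"
  proof -
    have "real (card ?M) \<le> real (\<Sum>i\<in>{1..m}. Delta (PP G i))" using B by (simp only: of_nat_le_iff)
    then show ?thesis using g0 by (intro mult_left_mono) auto
  qed
  then show "real k \<le> 2 * ?g * real (\<Sum>i\<in>{1..m}. Delta (PP G i))" using A by linarith
qed



lemma max_ratio_exists:
  fixes w p :: "nat \<Rightarrow> real"
  assumes "finite X" "X \<noteq> {}" "\<forall>x\<in>X. 0 < w x"
  shows "\<exists>z\<in>X. \<forall>x\<in>X. p x * w z \<le> p z * w x"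
proof -
  let ?f = "\<lambda>x. p x / w x"
  have "Max (?f ` X) \<in> ?f ` X" using Max_in[of "?f ` X"] assms by auto
  then obtain z where z: "z \<in> X" "?f z = Max (?f ` X)" by auto
  have "\<forall>x\<in>X. p x * w z \<le> p z * w x"
  proof
    fix x assume x: "x \<in> X"
    have "?f x \<le> ?f z" using z x assms by simp
    moreover have "w x > 0" "w z > 0" using assms x z by auto
    ultimately show "p x * w z \<le> p z * w x" by (simp add: field_simps)
  qed
  then show ?thesis using z by blast
qed

lemma knapsack:
  fixes w p :: "nat \<Rightarrow> real"
  assumes "finite X"
  shows "\<forall>x\<in>X. 0 < w x \<and> w x \<le> Lam \<and> 0 \<le> p x \<Longrightarrow> 0 < Lam \<Longrightarrow> 0 \<le> \<tau> \<Longrightarrow> \<tau> \<le> sum w X \<Longrightarrow>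
    \<exists>A\<subseteq>X. \<tau> \<le> sum w A \<and> sum w A < \<tau> + Lam \<and> sum p A * sum w X \<le> sum p X * sum w A"
  using assms
proof (induction X rule: finite_psubset_induct)
  case (psubset X)
  note hyp = psubset.prems(1) and Lam = psubset.prems(2) and tau = psubset.prems(3,4)
  show ?case
  proof (cases "\<tau> = 0")
    case True
    then show ?thesis using Lam by (intro exI[of _ "{}"]) auto
  next
    case False
    then have tpos: "\<tau> > 0" using tau by simp
    then have ne: "X \<noteq> {}" using tau by auto
    obtain z where z: "z \<in> X" "\<forall>x\<in>X. p x * w z \<le> p z * w x"
      using max_ratio_exists[OF psubset.hyps(1) ne] hyp by blast
    let ?X' = "X - {z}"
    have finX': "finite ?X'" using psubset.hyps(1) by simp
    have sw: "sum w X = w z + sum w ?X'" using sum.remove[OF psubset.hyps(1) z(1)] .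
    have sp: "sum p X = p z + sum p ?X'" using sum.remove[OF psubset.hyps(1) z(1)] .
    show ?thesis
    proof (cases "\<tau> \<le> sum w ?X'")
      case True
      have sub: "?X' \<subset> X" using z by blast
      obtain A where A: "A \<subseteq> ?X'" "\<tau> \<le> sum w A" "sum w A < \<tau> + Lam" "sum p A * sum w ?X' \<le> sum p ?X' * sum w A"
        using psubset.IH[OF sub _ Lam tau(1) True] hyp finX' by auto
      have wX'pos: "sum w ?X' > 0" using True tpos by linarith
      have wA: "sum w A \<ge> 0" using A(2) tpos by linarith
      have wX: "sum w X \<ge> 0" using sw z hyp wX'pos by fastforce
      have key: "sum p ?X' * sum w X \<le> sum p X * sum w ?X'"
      proof -
        have "sum p ?X' * w z = (\<Sum>x\<in>?X'. p x * w z)" by (simp add: sum_distrib_right)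
        also have "\<dots> \<le> (\<Sum>x\<in>?X'. p z * w x)" using z(2) by (intro sum_mono) auto
        also have "\<dots> = p z * sum w ?X'" by (simp add: sum_distrib_left)
        finally have "sum p ?X' * w z \<le> p z * sum w ?X'" .
        then show ?thesis unfolding sw sp by (simp add: algebra_simps)
      qed
      have "sum p A * sum w X * sum w ?X' = (sum p A * sum w ?X') * sum w X" by simp
      also have "\<dots> \<le> (sum p ?X' * sum w A) * sum w X" using A(4) wX by (rule mult_right_mono)
      also have "\<dots> = sum w A * (sum p ?X' * sum w X)" by simp
      also have "\<dots> \<le> sum w A * (sum p X * sum w ?X')" using key wA by (rule mult_left_mono)
      also have "\<dots> = (sum p X * sum w A) * sum w ?X'" by simp
      finally have "sum p A * sum w X * sum w ?X' \<le> (sum p X * sum w A) * sum w ?X'" .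
      then have "sum p A * sum w X \<le> sum p X * sum w A" using wX'pos by simp
      then show ?thesis using A by (intro exI[of _ A]) auto
    next
      case False
      have "sum w X < \<tau> + Lam" using sw False hyp z by fastforce
      then show ?thesis using tau by (intro exI[of _ X]) auto
    qed
  qed
qed



definition touch :: "(nat \<Rightarrow> pgraph) \<Rightarrow> pgraph \<Rightarrow> nat \<Rightarrow> bool" where
  "touch G C i \<longleftrightarrow> verts C \<inter> verts (G i) \<noteq> {}"
definition active :: "(nat \<Rightarrow> pgraph) \<Rightarrow> nat \<times> pgraph \<Rightarrow> bool" where
  "active G s \<longleftrightarrow> (\<exists>i. 1 \<le> i \<and> i < fst s \<and> touch G (snd s) i)"
definition tau :: "(nat \<Rightarrow> pgraph) \<Rightarrow> nat \<times> pgraph \<Rightarrow> nat" where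
  "tau G s = (LEAST i. 1 \<le> i \<and> i < fst s \<and> touch G (snd s) i)"
definition step :: "(nat \<Rightarrow> pgraph) \<Rightarrow> nat \<times> pgraph \<Rightarrow> nat \<times> pgraph" where
  "step G s = (if active G s then (tau G s, SOME C'. C' \<in> components (G (tau G s)) \<and> verts C' \<inter> verts (snd s) \<noteq> {}) else s)"
definition chain :: "(nat \<Rightarrow> pgraph) \<Rightarrow> nat \<times> pgraph \<Rightarrow> nat \<Rightarrow> nat \<times> pgraph" where
  "chain G s n = (step G ^^ n) s"

lemma chain_0: "chain G s 0 = s" unfolding chain_def by simp
lemma chain_Suc: "chain G s (Suc n) = step G (chain G s n)" unfolding chain_def by simp

lemma tau_props:
  assumes "active G s"
  shows "1 \<le> tau G s" "tau G s < fst s" "touch G (snd s) (tau G s)"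
    "\<And>i. 1 \<le> i \<Longrightarrow> i < tau G s \<Longrightarrow> \<not> touch G (snd s) i"
proof -
  let ?P = "\<lambda>i. 1 \<le> i \<and> i < fst s \<and> touch G (snd s) i"
  obtain i where "?P i" using assms unfolding active_def by blast
  then have "?P (tau G s)" unfolding tau_def by (rule LeastI)
  then show "1 \<le> tau G s" "tau G s < fst s" "touch G (snd s) (tau G s)" by auto
  fix i assume i: "1 \<le> i" "i < tau G s"
  then have "\<not> ?P i" unfolding tau_def using not_less_Least[of i ?P] by blast
  moreover have "i < fst s" using i \<open>?P (tau G s)\<close> by simp
  ultimately show "\<not> touch G (snd s) i" using i by simp
qed

lemma step_active:
  assumes "active G s"
  shows "fst (step G s) = tau G s" "snd (step G s) \<in> components (G (tau G s))"
    "verts (snd (step G s)) \<inter> verts (snd s) \<noteq> {}"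
proof -
  let ?Q = "\<lambda>C'. C' \<in> components (G (tau G s)) \<and> verts C' \<inter> verts (snd s) \<noteq> {}"
  have "\<exists>C'. ?Q C'"
  proof -
    obtain v where v: "v \<in> verts (snd s)" "v \<in> verts (G (tau G s))"
      using tau_props(3)[OF assms] unfolding touch_def by blast
    then have "v \<in> G (tau G s) \<or> v + 1 \<in> G (tau G s)" unfolding verts_def by simp
    then show ?thesis
    proof
      assume h: "v \<in> G (tau G s)"
      let ?C = "comp (G (tau G s)) v"
      have "?C \<in> components (G (tau G s))" using h unfolding components_def by blast
      moreover have "v \<in> verts ?C" using comp_self[OF h] unfolding verts_def by blast
      ultimately show ?thesis using v by blast
    next
      assume h: "v + 1 \<in> G (tau G s)"
      let ?C = "comp (G (tau G s)) (v + 1)"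
      have "?C \<in> components (G (tau G s))" using h unfolding components_def by blast
      moreover have "v \<in> verts ?C" using comp_self[OF h] unfolding verts_def by blast
      ultimately show ?thesis using v by blast
    qed
  qed
  then have "?Q (SOME C'. ?Q C')" by (rule someI_ex)
  then show "fst (step G s) = tau G s" "snd (step G s) \<in> components (G (tau G s))"
    "verts (snd (step G s)) \<inter> verts (snd s) \<noteq> {}" unfolding step_def using assms by auto
qed

lemma step_inactive: "\<not> active G s \<Longrightarrow> step G s = s" unfolding step_def by simp

lemma chain_inv:
  assumes "fst s \<in> {1..m}" "snd s \<in> components (G (fst s))"
  shows "fst (chain G s n) \<in> {1..m} \<and> snd (chain G s n) \<in> components (G (fst (chain G s n)))"
proof (induction n)
  case 0 then show ?case using assms by (simp add: chain_0)
next
  case (Suc n)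
  show ?case
  proof (cases "active G (chain G s n)")
    case True
    have "1 \<le> tau G (chain G s n)" "tau G (chain G s n) < fst (chain G s n)" using tau_props[OF True] by auto
    then show ?thesis using step_active[OF True] Suc unfolding chain_Suc by auto
  next
    case False then show ?thesis using Suc unfolding chain_Suc step_inactive[OF False] by simp
  qed
qed

lemma chain_decr:
  assumes "active G (chain G s n)"
  shows "fst (chain G s (Suc n)) < fst (chain G s n)"
  using step_active(1)[OF assms] tau_props(2)[OF assms] unfolding chain_Suc by simp

lemma chain_bound:
  "(\<forall>j<n. active G (chain G s j)) \<Longrightarrow> fst (chain G s n) + n \<le> fst s"
proof (induction n)
  case 0 then show ?case by (simp add: chain_0)
next
  case (Suc n)
  then have "fst (chain G s n) + n \<le> fst s" by simp
  moreover have "fst (chain G s (Suc n)) < fst (chain G s n)" using chain_decr Suc.prems by blast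
  ultimately show ?case by simp
qed

lemma chain_terminates:
  assumes "fst s \<in> {1..m}" "snd s \<in> components (G (fst s))"
  shows "\<exists>n. \<not> active G (chain G s n)"
proof (rule ccontr)
  assume "\<not> ?thesis"
  then have "\<forall>j<fst s. active G (chain G s j)" by blast
  then have "fst (chain G s (fst s)) + fst s \<le> fst s" by (rule chain_bound)
  moreover have "fst (chain G s (fst s)) \<ge> 1" using chain_inv[of s m G "fst s"] assms by simp
  ultimately show False by simp
qed

lemma chain_mono:
  assumes "\<forall>j<L. active G (chain G s j)" "i < j" "j \<le> L"
  shows "fst (chain G s j) < fst (chain G s i)"
  using assms(2,3)
proof (induction j)
  case 0 then show ?case by simp
next
  case (Suc j)
  have "fst (chain G s (Suc j)) < fst (chain G s j)" using chain_decr assms(1) Suc.prems by simp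
  moreover have "fst (chain G s j) \<le> fst (chain G s i)"
    using Suc by (cases "i = j") auto
  ultimately show ?case by simp
qed



lemma partb:
  assumes fin: "\<forall>i\<in>{1..m}. finite (G i)" and k: "k \<ge> 1" and U: "(\<Union>i\<in>{1..m}. G i) = {1..int k}"
    and I: "I \<subseteq> {1..m}" "m \<in> I"
    and cost: "2 * real (\<Sum>i\<in>{1..m}-I. Delta (PP G i)) \<le> real (\<Sum>i\<in>{1..m}. Delta (PP G i))"
  shows "\<forall>j\<in>{1..m}. real (vecDelta (reorder m G (sigmaI (tildeI I j)))) \<ge> real k / (4 * gap k (reorder m G id))"
proof
  fix j assume j: "j \<in> {1..m}"
  let ?g = "gap k (reorder m G id)"
  let ?D = "(\<Sum>i\<in>{1..m}. Delta (PP G i))"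
  let ?c = "(\<Sum>i\<in>{1..m}-I. Delta (PP G i))"
  have gpos: "?g > 0" and kD: "real k \<le> 2 * ?g * real ?D" using gap_cover[OF fin k U] by auto
  let ?I' = "tildeI I j"
  have I': "?I' \<subseteq> {1..m}" "m \<in> ?I'" "I \<subseteq> ?I'" using tildeI_props[OF I j] by auto
  have "(\<Sum>q\<in>I. Delta (PP G q)) \<le> (\<Sum>q\<in>?I'. Delta (PP G q))"
    by (rule sum_mono2) (use I' finite_subset in auto)
  also have "\<dots> \<le> vecDelta (reorder m G (sigmaI ?I'))"
    using vecDelta_lower[OF fin I'(1,2)] unfolding PP_def .
  finally have A: "(\<Sum>q\<in>I. Delta (PP G q)) \<le> vecDelta (reorder m G (sigmaI ?I'))" .
  have "?D = (\<Sum>i\<in>{1..m}-I. Delta (PP G i)) + (\<Sum>q\<in>I. Delta (PP G q))"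
    using sum.subset_diff[OF I(1), of "\<lambda>i. Delta (PP G i)"] by simp
  then have "real ?D - real ?c \<le> real (vecDelta (reorder m G (sigmaI ?I')))" using A by linarith
  then have B: "real ?D / 2 \<le> real (vecDelta (reorder m G (sigmaI ?I')))" using cost by linarith
  have "real k / (4 * ?g) \<le> 2 * ?g * real ?D / (4 * ?g)" using kD gpos by (intro divide_right_mono) auto
  also have "\<dots> = real ?D / 2" using gpos by (simp add: field_simps)
  finally show "real k / (4 * ?g) \<le> real (vecDelta (reorder m G (sigmaI ?I')))" using B by linarith
qed

lemma Lam_ge:
  fixes G :: "nat \<Rightarrow> pgraph"
  assumes fin: "\<forall>i\<in>{1..m}. finite (G i)" and i: "i \<in> {1..m}" and C: "C \<in> components (G i)"
  shows "card C \<le> Max ((\<lambda>i. lam (G i)) ` {1..m})"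
proof -
  have "card C \<le> lam (G i)" using lam_ge_card fin i C by blast
  also have "\<dots> \<le> Max ((\<lambda>i. lam (G i)) ` {1..m})" using i by (intro Max_ge finite_imageI) auto
  finally show ?thesis .
qed

lemma interval_of_comp:
  assumes "finite H" "C \<in> components H"
  shows "\<exists>l r. l \<le> r \<and> C = {l..r}"
proof -
  have "is_comp H C" using components_char[OF assms(1)] assms(2) by simp
  then obtain l r where "l \<le> r" "C = {l..r}" unfolding is_comp_def by blast
  then show ?thesis by blast
qed

lemma interval_facts:
  assumes lr: "l \<le> r" and C: "C = {l..r}"
  shows "Min C = l" "Max C = r" "real (card C) = real_of_int (r - l + 1)" "verts C = {l-1..r}"
    "midpoint C = (real_of_int (l - 1) + real_of_int r) / 2"
proof -
  show mn: "Min C = l" unfolding C using lr by (intro Min_eqI) auto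
  show mx: "Max C = r" unfolding C using lr by (intro Max_eqI) auto
  have "card C = nat (r - l + 1)" unfolding C by simp
  then show "real (card C) = real_of_int (r - l + 1)" using lr by simp
  show "verts C = {l-1..r}" unfolding C using verts_interval[OF lr] .
  show "midpoint C = (real_of_int (l - 1) + real_of_int r) / 2" unfolding midpoint_def mn mx ..
qed



theorem lemma5p10:
  fixes k m :: nat and G :: "nat \<Rightarrow> pgraph"
  assumes "k \<ge> 1"
    and "\<forall>i\<in>{1..m}. finite (G i)"
    and "(\<Union>i\<in>{1..m}. G i) = {1..int k}"
  shows "\<exists>I. I \<subseteq> {1..m} \<and> m \<in> I \<and> shift_perm m (sigmaI I) \<and>
     real (vecLambda (reorder m G (sigmaI I)))
        \<ge> (gap k (reorder m G id) - 3 * real (Max ((\<lambda>i. lam (G i)) ` {1..m}))) / 4 \<and>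
     (\<forall>j\<in>{1..m}. real (vecDelta (reorder m G (sigmaI (tildeI I j)))) \<ge> real k / (4 * gap k (reorder m G id)))"
proof -
  note k = assms(1) and fin = assms(2) and U = assms(3)
  define g where "g = gap k (reorder m G id)"
  define Lam where "Lam = Max ((\<lambda>i. lam (G i)) ` {1..m})"
  define D where "D = (\<Sum>i\<in>{1..m}. Delta (PP G i))"
  have gpos: "g > 0" using gap_cover(2)[OF fin k U] unfolding g_def .
  have m1: "m \<ge> 1"
  proof (rule ccontr)
    assume "\<not> m \<ge> 1" then have "{1..m} = {}" by auto
    then have "{1..int k} = {}" using U by simp
    then show False using k by simp
  qed
  show ?thesis
  proof (cases "g \<le> 3 * real Lam")
    case True
    let ?I = "{1..m}"
    have I: "?I \<subseteq> {1..m}" "m \<in> ?I" using m1 by auto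
    have cost: "2 * real (\<Sum>i\<in>{1..m}-?I. Delta (PP G i)) \<le> real (\<Sum>i\<in>{1..m}. Delta (PP G i))" by (simp only: Diff_cancel sum.empty)
    have lamb: "(g - 3 * real Lam) / 4 \<le> real (vecLambda (reorder m G (sigmaI ?I)))" using True by simp
    show ?thesis
      using I shift_perm_sigmaI[OF I] lamb partb[OF fin k U I cost] unfolding g_def Lam_def by blast
  next
    case False
    then have big: "g > 3 * real Lam" by simp
    obtain y where y: "y \<in> {0..real k}" "g - 1/2 < fy G m y" using gap_approx[OF fin k U] unfolding g_def by blast
    define e0 :: int where "e0 = (if y \<le> 1 then 1 else \<lceil>y\<rceil>)"
    have e0: "e0 \<in> {1..int k}" "real_of_int e0 - 1 \<le> y" "y \<le> real_of_int e0"
    proof -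
      show "e0 \<in> {1..int k}"
      proof (cases "y \<le> 1")
        case True then show ?thesis unfolding e0_def using k by simp
      next
        case False
        then have "\<lceil>y\<rceil> \<le> int k" using y(1) by (simp add: ceiling_le_iff)
        moreover have "\<lceil>y\<rceil> \<ge> 1" using False by (simp add: le_ceiling_iff)
        ultimately show ?thesis unfolding e0_def using False by simp
      qed
      show "real_of_int e0 - 1 \<le> y" unfolding e0_def using y(1) ceiling_correct[of y] by auto
      show "y \<le> real_of_int e0" unfolding e0_def using ceiling_correct[of y] by auto
    qed
    obtain t0 where t0: "t0 \<in> {1..m}" "e0 \<in> G t0" using U e0(1) by blast
    define C0 where "C0 = comp (G t0) e0"
    have C0: "C0 \<in> components (G t0)" unfolding C0_def components_def using t0 by blast
    define s0 where "s0 = (t0, C0)"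
    have s0: "fst s0 \<in> {1..m}" "snd s0 \<in> components (G (fst s0))" unfolding s0_def using t0 C0 by auto
    define t where "t n = fst (chain G s0 n)" for n
    define C where "C n = snd (chain G s0 n)" for n
    have inv: "\<And>n. t n \<in> {1..m}" "\<And>n. C n \<in> components (G (t n))"
      using chain_inv[of s0 m G] s0 unfolding t_def C_def by auto
    have finC: "\<And>n. finite (G (t n))" using fin inv(1) by blast
    obtain L0 where L0: "\<not> active G (chain G s0 L0)" using chain_terminates[of s0 m G] s0 by blast
    define L where "L = (LEAST n. \<not> active G (chain G s0 n))"
    have L1: "\<not> active G (chain G s0 L)" unfolding L_def by (rule LeastI[of "\<lambda>n. \<not> active G (chain G s0 n)", OF L0])
    have L2: "\<forall>j<L. active G (chain G s0 j)"
    proof (intro allI impI)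
      fix j assume "j < L"
      then show "active G (chain G s0 j)" using not_less_Least[of j "\<lambda>n. \<not> active G (chain G s0 n)"] unfolding L_def by blast
    qed
    note L = L1 L2
    have tdec: "\<And>i j. i < j \<Longrightarrow> j \<le> L \<Longrightarrow> t j < t i" unfolding t_def by (rule chain_mono[OF L2])
    have tle: "\<And>i j. i \<le> j \<Longrightarrow> j \<le> L \<Longrightarrow> t j \<le> t i"
    proof -
      fix i j assume "i \<le> j" "j \<le> L"
      then show "t j \<le> t i" using tdec[of i j] by (cases "i = j") auto
    qed
    have actj: "\<And>j. j < L \<Longrightarrow> active G (chain G s0 j)" using L2 by blast
    have tstep: "\<And>j. j < L \<Longrightarrow> t (Suc j) = tau G (chain G s0 j)"
      unfolding t_def chain_Suc using step_active(1)[OF actj] .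
    have notouch: "\<And>j i. j < L \<Longrightarrow> 1 \<le> i \<Longrightarrow> i < t (Suc j) \<Longrightarrow> \<not> touch G (C j) i"
    proof -
      fix j i assume j: "j < L" and i: "1 \<le> i" "i < t (Suc j)"
      show "\<not> touch G (C j) i" unfolding C_def using tau_props(4)[OF actj[OF j] i(1)] i(2) tstep[OF j] by simp
    qed
    have link: "\<And>j. j < L \<Longrightarrow> verts (C (Suc j)) \<inter> verts (C j) \<noteq> {}"
      unfolding C_def chain_Suc using step_active(3)[OF actj] .
    have CL: "C L \<in> components (UU G m)"
    proof -
      have nt: "\<And>i. 1 \<le> i \<Longrightarrow> i < t L \<Longrightarrow> \<not> touch G (C L) i" using L(1) unfolding active_def t_def C_def by auto
      have "\<forall>i\<in>{1..<t L}. verts (C L) \<inter> verts (G i) = {}" using nt unfolding touch_def by auto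
      then have "verts (C L) \<inter> verts (\<Union> (G ` {1..<t L})) = {}" unfolding verts_UN by blast
      then have "C L \<in> components (PP G (t L))" unfolding PP_def
        using components_ominus[OF finC[of L]] inv(2)[of L] by auto
      then show ?thesis using comp_PP_in_UU[OF fin inv(1)[of L]] by blast
    qed
    have ivl: "\<And>n. \<exists>l r. l \<le> r \<and> C n = {l..r}" using interval_of_comp finC inv(2) by blast
    have cardLam: "\<And>n. card (C n) \<le> Lam" unfolding Lam_def using Lam_ge[OF fin inv(1) inv(2)] .
    have card1: "\<And>n. card (C n) \<ge> 1"
    proof -
      fix n obtain l r where "l \<le> r" "C n = {l..r}" using ivl by blast
      then show "card (C n) \<ge> 1" by simp
    qed
    have Lam1: "real Lam \<ge> 1" using cardLam[of 0] card1[of 0] by simp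
    define w where "w j = real (card (C j))" for j
    define W where "W = (\<Sum>j<L. w j)"
    have dist: "\<And>n. n \<le> L \<Longrightarrow> \<exists>x::real. real_of_int (Min (C n)) - 1 \<le> x \<and> x \<le> real_of_int (Max (C n)) \<and> \<bar>x - y\<bar> \<le> (\<Sum>j<n. w j)"
    proof -
      fix n assume "n \<le> L"
      then show "\<exists>x::real. real_of_int (Min (C n)) - 1 \<le> x \<and> x \<le> real_of_int (Max (C n)) \<and> \<bar>x - y\<bar> \<le> (\<Sum>j<n. w j)"
      proof (induction n)
        case 0
        have "C 0 = C0" unfolding C_def s0_def by (simp add: chain_0)
        then have e0C: "e0 \<in> C 0" unfolding C0_def using comp_self t0 by simp
        have "finite (C 0)" using finC[of 0] inv(2)[of 0] components_subset finite_subset by blast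
        then have "Min (C 0) \<le> e0" "e0 \<le> Max (C 0)" using e0C by auto
        then show ?case using e0 by (intro exI[of _ y]) auto
      next
        case (Suc n)
        then have nL: "n < L" by simp
        obtain x where x: "real_of_int (Min (C n)) - 1 \<le> x" "x \<le> real_of_int (Max (C n))" "\<bar>x - y\<bar> \<le> (\<Sum>j<n. w j)"
          using Suc by auto
        obtain v where v: "v \<in> verts (C (Suc n))" "v \<in> verts (C n)" using link[OF nL] by blast
        obtain l r where lr: "l \<le> r" "C n = {l..r}" using ivl by blast
        obtain l' r' where lr': "l' \<le> r'" "C (Suc n) = {l'..r'}" using ivl by blast
        have vn: "l - 1 \<le> v" "v \<le> r" using v(2) interval_facts(4)[OF lr] by auto
        have vn': "l' - 1 \<le> v" "v \<le> r'" using v(1) interval_facts(4)[OF lr'] by auto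
        have wn: "w n = real_of_int (r - l + 1)" unfolding w_def using interval_facts(3)[OF lr] .
        have "\<bar>real_of_int v - x\<bar> \<le> w n" using x vn wn interval_facts(1,2)[OF lr] by auto
        then have "\<bar>real_of_int v - y\<bar> \<le> (\<Sum>j<Suc n. w j)" using x(3) by simp
        moreover have "real_of_int (Min (C (Suc n))) - 1 \<le> real_of_int v" "real_of_int v \<le> real_of_int (Max (C (Suc n)))"
          using vn' interval_facts(1,2)[OF lr'] by auto
        ultimately show ?case by blast
      qed
    qed
    have Wbig: "W \<ge> g - real Lam"
    proof -
      obtain x where x: "real_of_int (Min (C L)) - 1 \<le> x" "x \<le> real_of_int (Max (C L))" "\<bar>x - y\<bar> \<le> W"
        using dist[of L] unfolding W_def by auto
      obtain l r where lr: "l \<le> r" "C L = {l..r}" using ivl by blast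
      have mL: "midpoint (C L) = (real_of_int l - 1 + real_of_int r) / 2" using interval_facts(5)[OF lr] by simp
      have wl: "w L = real_of_int r - real_of_int l + 1" using interval_facts(3)[OF lr] unfolding w_def by simp
      have xl: "real_of_int l - 1 \<le> x" "x \<le> real_of_int r" using x interval_facts(1,2)[OF lr] by auto
      have "\<bar>midpoint (C L) - x\<bar> \<le> w L / 2"
        unfolding mL wl abs_le_iff using xl by (auto simp: field_simps)
      moreover have "w L \<le> real Lam" unfolding w_def using cardLam[of L] by simp
      moreover have "g - 1/2 < \<bar>midpoint (C L) - y\<bar>" using fy_le[OF fin CL, of y] y(2) by linarith
      ultimately show ?thesis using x(3) Lam1 by linarith
    qed
    define p where "p j = real (\<Sum>i\<in>{t (Suc j)..<t j}. Delta (PP G i))" for j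
    have tele: "\<And>n. n \<le> L \<Longrightarrow> (\<Sum>j<n. p j) = real (\<Sum>i\<in>{t n..<t 0}. Delta (PP G i))"
    proof -
      fix n assume "n \<le> L"
      then show "(\<Sum>j<n. p j) = real (\<Sum>i\<in>{t n..<t 0}. Delta (PP G i))"
      proof (induction n)
        case 0 then show ?case by simp
      next
        case (Suc n)
        have a: "t (Suc n) \<le> t n" "t n \<le> t 0" using tle Suc.prems by auto
        have "(\<Sum>j<Suc n. p j) = real (\<Sum>i\<in>{t n..<t 0}. Delta (PP G i)) + p n" using Suc by simp
        also have "\<dots> = real ((\<Sum>i\<in>{t (Suc n)..<t n}. Delta (PP G i)) + (\<Sum>i\<in>{t n..<t 0}. Delta (PP G i)))"
          unfolding p_def by simp
        also have "\<dots> = real (\<Sum>i\<in>{t (Suc n)..<t 0}. Delta (PP G i))"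
          using sum.atLeastLessThan_concat[OF a] by simp
        finally show ?case .
      qed
    qed
    have pX: "(\<Sum>j<L. p j) \<le> real D"
    proof -
      have "{t L..<t 0} \<subseteq> {1..m}" using inv(1)[of L] inv(1)[of 0] by auto
      then have "(\<Sum>i\<in>{t L..<t 0}. Delta (PP G i)) \<le> D" unfolding D_def by (intro sum_mono2) auto
      moreover have eq: "(\<Sum>j<L. p j) = real (\<Sum>i\<in>{t L..<t 0}. Delta (PP G i))" using tele[of L] by blast
      ultimately show ?thesis by (subst eq) (simp only: of_nat_le_iff)
    qed
    have p0: "\<And>j. p j \<ge> 0" unfolding p_def by (simp only: of_nat_0_le_iff)
    define \<tau> where "\<tau> = (g - 3 * real Lam) / 2"
    have tau_pos: "\<tau> > 0" unfolding \<tau>_def using big by simp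
    have tauW: "\<tau> \<le> sum w {..<L}" using Wbig gpos Lam1 unfolding \<tau>_def W_def by simp
    have items: "\<forall>x\<in>{..<L}. 0 < w x \<and> w x \<le> real Lam \<and> 0 \<le> p x"
      using card1 cardLam p0 unfolding w_def by (auto simp: Suc_le_eq)
    obtain A where A: "A \<subseteq> {..<L}" "\<tau> \<le> sum w A" "sum w A < \<tau> + real Lam"
      "sum p A * sum w {..<L} \<le> sum p {..<L} * sum w A"
      using knapsack[OF _ items _ _ tauW] Lam1 tau_pos by auto
    have Wpos: "W > 0" using Wbig big Lam1 by linarith
    have pA: "sum p A \<le> real D / 2"
    proof -
      have wA0: "sum w A \<ge> 0" using A(2) tau_pos by linarith
      have "sum p A * W \<le> sum p {..<L} * sum w A" using A(4) unfolding W_def by simp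
      also have "\<dots> \<le> real D * sum w A" using pX wA0 by (intro mult_right_mono) auto
      also have "\<dots> \<le> real D * (W / 2)"
      proof -
        have "sum w A \<le> W / 2" using A(3) Wbig unfolding \<tau>_def by (simp add: field_simps)
        then show ?thesis by (intro mult_left_mono) auto
      qed
      finally have "sum p A * W \<le> (real D / 2) * W" by simp
      then show ?thesis using Wpos by simp
    qed
    obtain J where J: "J \<subseteq> {..<L}" "sum w J \<ge> (g - 3 * real Lam) / 4" "sum p J \<le> real D / 2"
      "\<And>j j'. j \<in> J \<Longrightarrow> j' \<in> J \<Longrightarrow> j' \<noteq> Suc j"
    proof -
      let ?A0 = "{j\<in>A. even j}" and ?A1 = "{j\<in>A. odd j}"
      have finA: "finite A" using A(1) finite_subset by blast
      have un: "?A0 \<union> ?A1 = A" by auto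
      have "sum w (?A0 \<union> ?A1) = sum w ?A0 + sum w ?A1" by (rule sum.union_disjoint) (use finA in auto)
      then have split: "sum w A = sum w ?A0 + sum w ?A1" using un by simp
      have pmono: "\<And>B. B \<subseteq> A \<Longrightarrow> sum p B \<le> sum p A" using finA p0 by (intro sum_mono2) auto
      show ?thesis
      proof (cases "sum w ?A0 \<ge> (g - 3 * real Lam) / 4")
        case True
        show ?thesis
        proof (rule that[of ?A0])
          show "?A0 \<subseteq> {..<L}" using A(1) by auto
          show "sum w ?A0 \<ge> (g - 3 * real Lam) / 4" using True .
          show "sum p ?A0 \<le> real D / 2" using pmono[of ?A0] pA by auto
          show "\<And>j j'. j \<in> ?A0 \<Longrightarrow> j' \<in> ?A0 \<Longrightarrow> j' \<noteq> Suc j" by auto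
        qed
      next
        case False
        show ?thesis
        proof (rule that[of ?A1])
          show "?A1 \<subseteq> {..<L}" using A(1) by auto
          show "sum w ?A1 \<ge> (g - 3 * real Lam) / 4" using False split A(2) unfolding \<tau>_def by linarith
          show "sum p ?A1 \<le> real D / 2" using pmono[of ?A1] pA by auto
          show "\<And>j j'. j \<in> ?A1 \<Longrightarrow> j' \<in> ?A1 \<Longrightarrow> j' \<noteq> Suc j" by auto
        qed
      qed
    qed
    define N where "N = (\<Union>j\<in>J. {t (Suc j)..<t j})"
    define I where "I = {1..m} - N"
    have JL: "\<And>j. j \<in> J \<Longrightarrow> j < L" using J(1) by auto
    have Nsub: "N \<subseteq> {1..m}"
    proof
      fix i assume "i \<in> N"
      then obtain j where j: "j \<in> J" "i \<in> {t (Suc j)..<t j}" unfolding N_def by blast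
      then show "i \<in> {1..m}" using inv(1)[of "Suc j"] inv(1)[of j] by auto
    qed
    have mI: "m \<in> I"
    proof -
      have "m \<notin> N"
      proof
        assume "m \<in> N"
        then obtain j where j: "j \<in> J" "m \<in> {t (Suc j)..<t j}" unfolding N_def by blast
        then show False using inv(1)[of j] by auto
      qed
      then show ?thesis unfolding I_def using m1 by auto
    qed
    have Isub: "I \<subseteq> {1..m}" unfolding I_def by auto
    have disj: "\<And>j j'. j \<in> J \<Longrightarrow> j' \<in> J \<Longrightarrow> j \<noteq> j' \<Longrightarrow> {t (Suc j)..<t j} \<inter> {t (Suc j')..<t j'} = {}"
    proof -
      fix j j' assume j: "j \<in> J" and j': "j' \<in> J" and ne: "j \<noteq> j'"
      show "{t (Suc j)..<t j} \<inter> {t (Suc j')..<t j'} = {}"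
      proof (cases "j < j'")
        case True
        then have "t j' \<le> t (Suc j)" using tle JL[OF j'(1)] by auto
        then show ?thesis by auto
      next
        case False
        then have "j' < j" using ne by simp
        then have "t j \<le> t (Suc j')" using tle JL[OF j] by auto
        then show ?thesis by auto
      qed
    qed
    have costI: "2 * real (\<Sum>i\<in>{1..m}-I. Delta (PP G i)) \<le> real (\<Sum>i\<in>{1..m}. Delta (PP G i))"
    proof -
      have "{1..m} - I = N" unfolding I_def using Nsub by auto
      moreover have "(\<Sum>i\<in>N. Delta (PP G i)) = (\<Sum>j\<in>J. (\<Sum>i\<in>{t (Suc j)..<t j}. Delta (PP G i)))"
        unfolding N_def using J(1) finite_subset disj by (intro sum.UNION_disjoint) auto
      ultimately have "real (\<Sum>i\<in>{1..m}-I. Delta (PP G i)) = sum p J" unfolding p_def by simp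
      then show ?thesis using J(3) unfolding D_def by simp
    qed
    have leadI: "\<And>j. j \<in> J \<Longrightarrow> t j \<in> I"
    proof -
      fix j assume j: "j \<in> J"
      have "t j \<notin> N"
      proof
        assume "t j \<in> N"
        then obtain j' where j': "j' \<in> J" "t j \<in> {t (Suc j')..<t j'}" unfolding N_def by blast
        show False
        proof (cases "j' < j")
          case True
          have "Suc j' \<noteq> j" using J(4)[OF j'(1) j] by simp
          then have "Suc j' < j" using True by simp
          then have "t j < t (Suc j')" using tdec JL[OF j] by simp
          then show False using j' by simp
        next
          case False
          then have "j \<le> j'" by simp
          then have "t j' \<le> t j" using tle JL[OF j'(1)] by simp
          then show False using j' by simp
        qed
      qed
      then show "t j \<in> I" unfolding I_def using inv(1)[of j] by simp
    qed
    have prdlt: "\<And>j. j \<in> J \<Longrightarrow> prd I (t j) < t (Suc j)"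
    proof -
      fix j assume j: "j \<in> J"
      have a: "prd I (t j) \<in> insert 0 I" "prd I (t j) < t j" using prd_props[OF Isub leadI[OF j]] by auto
      show "prd I (t j) < t (Suc j)"
      proof (cases "prd I (t j) = 0")
        case True then show ?thesis using inv(1)[of "Suc j"] by simp
      next
        case False
        then have "prd I (t j) \<in> I" using a by simp
        then have "prd I (t j) \<notin> {t (Suc j)..<t j}" unfolding I_def N_def using j by blast
        then show ?thesis using a by simp
      qed
    qed
    have leadlam: "\<And>j. j \<in> J \<Longrightarrow> card (C j) \<le> lam (ominus (G (t j)) (\<Union> (G ` {1..prd I (t j)})))"
    proof -
      fix j assume j: "j \<in> J"
      have "verts (C j) \<inter> verts (\<Union> (G ` {1..prd I (t j)})) = {}"
        using notouch[OF JL[OF j]] prdlt[OF j] unfolding verts_UN touch_def by fastforce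
      then show "card (C j) \<le> lam (ominus (G (t j)) (\<Union> (G ` {1..prd I (t j)})))"
        using lam_ominus_ge[OF finC[of j] inv(2)[of j]] by blast
    qed
    have injt: "inj_on t J"
    proof
      fix a b assume a: "a \<in> J" and b: "b \<in> J" and e: "t a = t b"
      show "a = b"
      proof (rule ccontr)
        assume "a \<noteq> b"
        then have "a < b \<or> b < a" by auto
        then show False using tdec JL[OF a] JL[OF b] e by (metis less_imp_le less_irrefl)
      qed
    qed
    have lamI: "(g - 3 * real Lam) / 4 \<le> real (vecLambda (reorder m G (sigmaI I)))"
    proof -
      have QI: "t ` J \<subseteq> I" using leadI by blast
      have "sum w J = real (\<Sum>j\<in>J. card (C j))" unfolding w_def by simp
      also have "(\<Sum>j\<in>J. card (C j)) \<le> (\<Sum>j\<in>J. lam (ominus (G (t j)) (\<Union> (G ` {1..prd I (t j)}))))"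
        using leadlam by (intro sum_mono) auto
      also have "\<dots> = (\<Sum>q\<in>t ` J. lam (ominus (G q) (\<Union> (G ` {1..prd I q}))))"
        using sum.reindex[OF injt, of "\<lambda>q. lam (ominus (G q) (\<Union> (G ` {1..prd I q})))"] by simp
      also have "\<dots> \<le> vecLambda (reorder m G (sigmaI I))" using vecLambda_lower[OF fin Isub mI QI] .
      finally have "sum w J \<le> real (vecLambda (reorder m G (sigmaI I)))" by simp
      then show ?thesis using J(2) by linarith
    qed
    show ?thesis
      using Isub mI shift_perm_sigmaI[OF Isub mI] lamI partb[OF fin k U Isub mI costI]
      unfolding g_def Lam_def by blast
  qed
qed


end
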